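(* Let $X^u$, $u=1,\dots,\dim\mathfrak g$, be a basis of $\mathfrak g$, and for every $u$, every $s\in\{1,\dots,N\}$ and every $m\in\mathbb Z$ fix any element $X^u_{m,s}\in\overline{\mathfrak g}$ with $X^u_{m,s}(z_p)=\delta^s_pX^uz_p^m+O(z_p^{m+1})$ for all $p=1,\dots,N$. Then: (a) the elements $X^u_{m,s}$ ($u=1,\dots,\dim\mathfrak g$, $s=1,\dots,N$, $m\in\mathbb Z$) are linearly independent; (b) for each $m$, the classes $[X^u_{m,s}]$, $u=1,\dots,\dim\mathfrak g$, $s=1,\dots,N$, form a basis of the quotient $\overline{\mathfrak g}'_{(m)}/\overline{\mathfrak g}'_{(m+1)}$; (c) $\dim\overline{\mathfrak g}'_{(m)}/\overline{\mathfrak g}'_{(m+1)}=N\cdot\dim\mathfrak g$; (d) the classes $[X^u_{m,s}]$ do not depend on the choice of the elements $X^u_{m,s}$.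
   Context: Let $\Sigma$ be a compact Riemann surface of genus $g$ and $A\subset\Sigma$ a finite set split into two disjoint non-empty subsets $I=\{P_1,\dots,P_N\}$ and $O=\{Q_1,\dots,Q_M\}$. Let $\mathfrak g$ be one of the complex matrix Lie algebras $\mathfrak{gl}(n)$, $\mathfrak{sl}(n)$, $\mathfrak{so}(n)$, or $\mathfrak{sp}(2n)=\{X: X^t\sigma+\sigma X=0\}$ for a fixed non-degenerate skew-symmetric matrix $\sigma$. Tyurin data: an integer $K\ge 0$, distinct points $\gamma_1,\dots,\gamma_K\in\Sigma\setminus A$ (the set $W$) and vectors $\alpha_s\in\mathbb C^n$ ($\mathbb C^{2n}$ for $\mathfrak{sp}$), with $\alpha_s^t\alpha_s=0$ in the $\mathfrak{so}$ case. Fix local coordinates $w_s$ centred at $\gamma_s$ and $z_p$ centred at $P_p$. The Lax operator algebra $\overline{\mathfrak g}$ is the set of meromorphic maps $L:\Sigma\to\mathfrak g$, holomorphic on $\Sigma\setminus(A\cup W)$, such that for each $s$: ($\mathfrak{gl}$) $L=L_{s,-1}w_s^{-1}+\sum_{k\ge0}L_{s,k}w_s^k$ near $\gamma_s$ with $\beta_s\in\mathbb C^n,\kappa_s\in\mathbb C$ such that $L_{s,-1}=\alpha_s\beta_s^t$, $\beta_s^t\alpha_s=0$, $L_{s,0}\alpha_s=\kappa_s\alpha_s$; ($\mathfrak{sl}$) the same with all $L_{s,k}$ traceless; ($\mathfrak{so}$) the same expansion with all $L_{s,k}$ skew-symmetric, $L_{s,-1}=\alpha_s\beta_s^t-\beta_s\alpha_s^t$,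 $\beta_s^t\alpha_s=0$, $L_{s,0}\alpha_s=\kappa_s\alpha_s$; ($\mathfrak{sp}$) $L=L_{s,-2}w_s^{-2}+L_{s,-1}w_s^{-1}+\sum_{k\ge0}L_{s,k}w_s^k$ with $\beta_s,\nu_s,\kappa_s$ such that $L_{s,-2}=\nu_s\alpha_s\alpha_s^t\sigma$, $L_{s,-1}=(\alpha_s\beta_s^t+\beta_s\alpha_s^t)\sigma$, $\beta_s^t\sigma\alpha_s=0$, $L_{s,0}\alpha_s=\kappa_s\alpha_s$, $\alpha_s^t\sigma L_{s,1}\alpha_s=0$. It is a Lie algebra under the pointwise commutator. For a matrix-valued meromorphic $L$ and a point $P$, $\mathrm{ord}_P(L)$ is the minimum of the orders at $P$ of the entries of $L$. Set $\overline{\mathfrak g}'_{(m)}:=\{L\in\overline{\mathfrak g}:\ \mathrm{ord}_{P_s}(L)\ge m \text{ for all } s=1,\dots,N\}$. (Such elements $X^u_{m,s}$ always exist.) *)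

theory Defs
  imports "HOL-Complex_Analysis.Complex_Analysis"
begin

no_notation fps_nth (infixl \<open>$\<close> 75)

type_synonym 'n cmat = "complex^'n^'n"

definition msc :: "complex \<Rightarrow> 'n::finite cmat \<Rightarrow> 'n::finite cmat" where
  "msc c M = (\<chi> i j. c * M $ i $ j)"

definition outer :: "complex^'n::finite \<Rightarrow> complex^'n::finite \<Rightarrow> 'n::finite cmat" where
  "outer a b = (\<chi> i j. a $ i * b $ j)"

definition bil :: "complex^'n::finite \<Rightarrow> complex^'n::finite \<Rightarrow> complex" where
  "bil a b = (\<Sum>i\<in>UNIV. a $ i * b $ i)"

datatype 'n liekind = GL | SL | SO | SP "'n::finite cmat"

fun lie_alg :: "'n::finite liekind \<Rightarrow> 'n::finite cmat set" where
  "lie_alg GL = UNIV"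
| "lie_alg SL = {X. trace X = 0}"
| "lie_alg SO = {X. transpose X = - X}"
| "lie_alg (SP \<sigma>) = {X. transpose X ** \<sigma> + \<sigma> ** X = 0}"

definition is_chart :: "'a::topological_space set \<Rightarrow> ('a \<Rightarrow> complex) \<Rightarrow> bool" where
  "is_chart U \<phi> \<longleftrightarrow> open U \<and> inj_on \<phi> U \<and> open (\<phi> ` U) \<and>
      homeomorphism U (\<phi> ` U) \<phi> (inv_into U \<phi>)"

definition chart_compat ::
  "'a set \<Rightarrow> ('a \<Rightarrow> complex) \<Rightarrow> 'a set \<Rightarrow> ('a \<Rightarrow> complex) \<Rightarrow> bool" where
  "chart_compat U \<phi> V \<psi> \<longleftrightarrow>
     (\<psi> \<circ> inv_into U \<phi>) holomorphic_on (\<phi> ` (U \<inter> V)) \<and>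
     (\<phi> \<circ> inv_into V \<psi>) holomorphic_on (\<psi> ` (U \<inter> V))"

definition compact_riemann_surface :: "('a::t2_space set \<times> ('a \<Rightarrow> complex)) set \<Rightarrow> bool" where
  "compact_riemann_surface atlas \<longleftrightarrow>
     (\<forall>(U,\<phi>)\<in>atlas. is_chart U \<phi>) \<and> (\<Union>(fst ` atlas) = UNIV) \<and>
     (\<forall>(U,\<phi>)\<in>atlas. \<forall>(V,\<psi>)\<in>atlas. chart_compat U \<phi> V \<psi>) \<and>
     compact (UNIV :: 'a set) \<and> connected (UNIV :: 'a set)"

definition local_coord ::
  "('a::topological_space set \<times> ('a \<Rightarrow> complex)) set \<Rightarrow> 'a set \<Rightarrow> ('a \<Rightarrow> complex) \<Rightarrow> 'a \<Rightarrow> bool" where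
  "local_coord atlas U \<phi> P \<longleftrightarrow> is_chart U \<phi> \<and> P \<in> U \<and> \<phi> P = 0 \<and>
     (\<forall>(V,\<psi>)\<in>atlas. chart_compat U \<phi> V \<psi>)"

definition in_chart :: "'a set \<Rightarrow> ('a \<Rightarrow> complex) \<Rightarrow> ('a \<Rightarrow> 'b) \<Rightarrow> complex \<Rightarrow> 'b" where
  "in_chart U \<phi> L = (\<lambda>\<zeta>. L (inv_into U \<phi> \<zeta>))"

definition mat_holo_on :: "(complex \<Rightarrow> 'n::finite cmat) \<Rightarrow> complex set \<Rightarrow> bool" where
  "mat_holo_on F S \<longleftrightarrow> (\<forall>i j. (\<lambda>\<zeta>. F \<zeta> $ i $ j) holomorphic_on S)"

definition merom_off ::
  "('a::topological_space set \<times> ('a \<Rightarrow> complex)) set \<Rightarrow> 'a set \<Rightarrow> ('a \<Rightarrow> 'n::finite cmat) \<Rightarrow> bool" where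
  "merom_off atlas S L \<longleftrightarrow>
     (\<forall>(V,\<psi>)\<in>atlas. mat_holo_on (in_chart V \<psi> L) (\<psi> ` (V - S))) \<and>
     (\<forall>(V,\<psi>)\<in>atlas. \<forall>x\<in>V \<inter> S. \<forall>i j.
         not_essential (\<lambda>\<zeta>. in_chart V \<psi> L \<zeta> $ i $ j) (\<psi> x))"

definition ord_ge ::
  "'a set \<Rightarrow> ('a \<Rightarrow> complex) \<Rightarrow> ('a \<Rightarrow> 'n::finite cmat) \<Rightarrow> int \<Rightarrow> bool" where
  "ord_ge U \<phi> L m \<longleftrightarrow> (\<forall>i j. \<exists>r>0. ball 0 r \<subseteq> \<phi> ` U \<and>
     (\<exists>h. h holomorphic_on ball 0 r \<and>
        (\<forall>\<zeta>\<in>ball 0 r - {0}. in_chart U \<phi> L \<zeta> $ i $ j = \<zeta> powi m * h \<zeta>)))"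

fun tyurin_cond :: "'n::finite liekind \<Rightarrow> 'a set \<Rightarrow> ('a \<Rightarrow> complex) \<Rightarrow> complex^'n::finite
    \<Rightarrow> ('a \<Rightarrow> 'n::finite cmat) \<Rightarrow> bool" where
  "tyurin_cond GL U w a L = (\<exists>r>0. ball 0 r \<subseteq> w ` U \<and> (\<exists>b \<kappa> H. mat_holo_on H (ball 0 r) \<and>
      (\<forall>\<zeta>\<in>ball 0 r - {0}. in_chart U w L \<zeta> = msc (1/\<zeta>) (outer a b) + H \<zeta>) \<and>
      bil b a = 0 \<and> H 0 *v a = \<kappa> *s a))"
| "tyurin_cond SL U w a L = (\<exists>r>0. ball 0 r \<subseteq> w ` U \<and> (\<exists>b \<kappa> H. mat_holo_on H (ball 0 r) \<and>
      (\<forall>\<zeta>\<in>ball 0 r - {0}. in_chart U w L \<zeta> = msc (1/\<zeta>) (outer a b) + H \<zeta>) \<and>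
      bil b a = 0 \<and> H 0 *v a = \<kappa> *s a))"
| "tyurin_cond SO U w a L = (\<exists>r>0. ball 0 r \<subseteq> w ` U \<and> (\<exists>b \<kappa> H. mat_holo_on H (ball 0 r) \<and>
      (\<forall>\<zeta>\<in>ball 0 r - {0}. in_chart U w L \<zeta> = msc (1/\<zeta>) (outer a b - outer b a) + H \<zeta>) \<and>
      bil b a = 0 \<and> H 0 *v a = \<kappa> *s a))"
| "tyurin_cond (SP \<sigma>) U w a L = (\<exists>r>0. ball 0 r \<subseteq> w ` U \<and> (\<exists>b \<nu> \<kappa> H. mat_holo_on H (ball 0 r) \<and>
      (\<forall>\<zeta>\<in>ball 0 r - {0}. in_chart U w L \<zeta> =
          msc (1/\<zeta>^2) (msc \<nu> (outer a a ** \<sigma>)) + msc (1/\<zeta>) ((outer a b + outer b a) ** \<sigma>) + H \<zeta>) \<and>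
      bil b (\<sigma> *v a) = 0 \<and> H 0 *v a = \<kappa> *s a \<and>
      bil a (\<sigma> *v ((\<chi> i j. deriv (\<lambda>\<zeta>. H \<zeta> $ i $ j) 0) *v a)) = 0))"

text \<open>The Lax operator algebra. Convention: elements take the junk value 0 on A \<union> W,
  so that equality of meromorphic maps is equality of HOL functions.\<close>
definition lax_alg ::
  "('a::t2_space set \<times> ('a \<Rightarrow> complex)) set \<Rightarrow> 'n::finite liekind \<Rightarrow> 'a set
   \<Rightarrow> nat \<Rightarrow> (nat \<Rightarrow> 'a) \<Rightarrow> (nat \<Rightarrow> 'a set) \<Rightarrow> (nat \<Rightarrow> 'a \<Rightarrow> complex) \<Rightarrow> (nat \<Rightarrow> complex^'n::finite)
   \<Rightarrow> ('a \<Rightarrow> 'n::finite cmat) set" where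
  "lax_alg atlas kind A K \<gamma> wU w \<alpha> =
    {L. (\<forall>x. x \<notin> A \<union> \<gamma> ` {1..K} \<longrightarrow> L x \<in> lie_alg kind) \<and>
        (\<forall>x\<in>A \<union> \<gamma> ` {1..K}. L x = 0) \<and>
        merom_off atlas (A \<union> \<gamma> ` {1..K}) L \<and>
        (\<forall>s\<in>{1..K}. tyurin_cond kind (wU s) (w s) (\<alpha> s) L)}"

definition filt ::
  "('a \<Rightarrow> 'n::finite cmat) set \<Rightarrow> nat \<Rightarrow> (nat \<Rightarrow> 'a set) \<Rightarrow> (nat \<Rightarrow> 'a \<Rightarrow> complex) \<Rightarrow> int
   \<Rightarrow> ('a \<Rightarrow> 'n::finite cmat) set" where
  "filt G N zU z m = {L \<in> G. \<forall>p\<in>{1..N}. ord_ge (zU p) (z p) L m}"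

definition quot_basis_fam ::
  "('a \<Rightarrow> 'n::finite cmat) set \<Rightarrow> ('a \<Rightarrow> 'n::finite cmat) set \<Rightarrow> 'i set \<Rightarrow> ('i \<Rightarrow> 'a \<Rightarrow> 'n::finite cmat) \<Rightarrow> bool" where
  "quot_basis_fam V W I b \<longleftrightarrow>
     (\<forall>i\<in>I. b i \<in> V) \<and>
     (\<forall>F c. finite F \<longrightarrow> F \<subseteq> I \<longrightarrow> (\<lambda>x. \<Sum>i\<in>F. msc (c i) (b i x)) \<in> W \<longrightarrow> (\<forall>i\<in>F. c i = 0)) \<and>
     (\<forall>L\<in>V. \<exists>F c. finite F \<and> F \<subseteq> I \<and> (\<lambda>x. L x - (\<Sum>i\<in>F. msc (c i) (b i x))) \<in> W)"

end

theory Submission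
  imports Defs "HOL-Library.Function_Algebras"
begin

lemma msc_nth[simp]: "msc c M $ i $ j = c * M $ i $ j"
  by (simp add: msc_def)

lemma msc_add: "msc c (X + Y) = msc c X + msc c Y"
  by (simp add: vec_eq_iff algebra_simps)
lemma msc_diff: "msc c (X - Y) = msc c X - msc c Y"
  by (simp add: vec_eq_iff algebra_simps)
lemma msc_add_left: "msc (c + d) X = msc c X + msc d X"
  by (simp add: vec_eq_iff algebra_simps)
lemma msc_zero[simp]: "msc c 0 = 0"
  by (simp add: vec_eq_iff)
lemma msc_zero_left[simp]: "msc 0 X = 0"
  by (simp add: vec_eq_iff)
lemma msc_msc[simp]: "msc c (msc d X) = msc (c * d) X"
  by (simp add: vec_eq_iff)
lemma msc_one[simp]: "msc 1 X = X"
  by (simp add: vec_eq_iff)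
lemma msc_sum: "msc c (\<Sum>i\<in>F. f i) = (\<Sum>i\<in>F. msc c (f i))"
  by (induction F rule: infinite_finite_induct) (auto simp: msc_add)
lemma msc_sum_left: "msc (\<Sum>i\<in>F. f i) X = (\<Sum>i\<in>F. msc (f i) X)"
  by (induction F rule: infinite_finite_induct) (auto simp: msc_add_left)
lemma msc_mult_right: "msc c X ** S = msc c (X ** S)"
  by (simp add: vec_eq_iff matrix_matrix_mult_def sum_distrib_left algebra_simps)
lemma msc_mult_left: "S ** msc c X = msc c (S ** X)"
  by (simp add: vec_eq_iff matrix_matrix_mult_def sum_distrib_left algebra_simps)
lemma msc_mv: "msc c X *v a = c *s (X *v a)"
  by (simp add: vec_eq_iff matrix_vector_mult_def sum_distrib_left algebra_simps)
lemma msc_transpose: "transpose (msc c X) = msc c (transpose X)"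
  by (simp add: vec_eq_iff transpose_def)
lemma msc_trace: "trace (msc c X) = c * trace X"
  by (simp add: trace_def sum_distrib_left)
lemma msc_uminus: "msc c (- X) = - msc c X"
  by (simp add: vec_eq_iff)

lemma outer_add_right: "outer a (b1 + b2) = outer a b1 + outer a b2"
  by (simp add: outer_def vec_eq_iff algebra_simps)
lemma outer_add_left: "outer (b1 + b2) a = outer b1 a + outer b2 a"
  by (simp add: outer_def vec_eq_iff algebra_simps)
lemma outer_scale_right: "outer a (c *s b) = msc c (outer a b)"
  by (simp add: outer_def vec_eq_iff algebra_simps)
lemma outer_scale_left: "outer (c *s b) a = msc c (outer b a)"
  by (simp add: outer_def vec_eq_iff algebra_simps)
lemma bil_add_left: "bil (b1 + b2) a = bil b1 a + bil b2 a"
  by (simp add: bil_def algebra_simps sum.distrib)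
lemma bil_add_right: "bil a (b1 + b2) = bil a b1 + bil a b2"
  by (simp add: bil_def algebra_simps sum.distrib)
lemma bil_scale_left: "bil (c *s b) a = c * bil b a"
  by (simp add: bil_def sum_distrib_left algebra_simps)
lemma bil_scale_right: "bil a (c *s b) = c * bil a b"
  by (simp add: bil_def sum_distrib_left algebra_simps)

lemma sum_fun_apply: "(\<Sum>i\<in>F. f i) x = (\<Sum>i\<in>F. f i x)"
  by (induction F rule: infinite_finite_induct) auto

lemma sum_mat_nth: "(\<Sum>i\<in>F. f i) $ a $ b = (\<Sum>i\<in>F. f i $ a $ b)"
  by (induction F rule: infinite_finite_induct) auto

lemma matrix_add_rdistrib': "(A + B) ** C = A ** C + B ** (C::'a::finite cmat)"
  by (simp add: vec_eq_iff matrix_matrix_mult_def algebra_simps sum.distrib)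

lemma transpose_add: "transpose (X + Y) = transpose X + transpose (Y::'a::finite cmat)"
  by (simp add: vec_eq_iff transpose_def)

lemma lie_zero: "0 \<in> lie_alg kind"
  by (cases kind) (auto simp: trace_def transpose_def vec_eq_iff matrix_matrix_mult_def)

lemma lie_add: "X \<in> lie_alg kind \<Longrightarrow> Y \<in> lie_alg kind \<Longrightarrow> X + Y \<in> lie_alg kind"
proof (cases kind)
  case (SP \<sigma>)
  assume "X \<in> lie_alg kind" "Y \<in> lie_alg kind"
  then show ?thesis using SP
    by (simp add: transpose_add matrix_add_rdistrib' matrix_add_ldistrib algebra_simps)
qed (auto simp: trace_def sum.distrib transpose_add)

lemma lie_msc: "X \<in> lie_alg kind \<Longrightarrow> msc c X \<in> lie_alg kind"
  by (cases kind) (auto simp: msc_trace msc_transpose msc_mult_right msc_mult_left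
      msc_uminus simp flip: msc_add)

lemma lie_subspace: "subspace (lie_alg kind)"
proof -
  have sc: "r *\<^sub>R X = msc (complex_of_real r) X" for r and X :: "'a::finite cmat"
    by (simp add: vec_eq_iff) (simp add: scaleR_conv_of_real)
  show ?thesis
    unfolding subspace_def using lie_zero lie_add lie_msc sc by metis
qed

lemma lie_closed: "closed (lie_alg kind)"
  by (rule closed_subspace[OF lie_subspace])

definition og :: "complex set \<Rightarrow> (complex \<Rightarrow> complex) \<Rightarrow> int \<Rightarrow> bool" where
  "og S f m \<longleftrightarrow> (\<exists>r>0. ball 0 r \<subseteq> S \<and>
     (\<exists>h. h holomorphic_on ball 0 r \<and> (\<forall>\<zeta>\<in>ball 0 r - {0}. f \<zeta> = \<zeta> powi m * h \<zeta>)))"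

lemma ord_ge_og: "ord_ge U \<phi> L m \<longleftrightarrow> (\<forall>i j. og (\<phi> ` U) (\<lambda>\<zeta>. in_chart U \<phi> L \<zeta> $ i $ j) m)"
  unfolding ord_ge_def og_def by blast

lemma og_cong:
  assumes "og S f m" "r0 > 0" "\<And>\<zeta>. \<zeta> \<in> ball 0 r0 - {0} \<Longrightarrow> f \<zeta> = g \<zeta>"
  shows "og S g m"
proof -
  obtain r h where r: "r > 0" "ball 0 r \<subseteq> S" "h holomorphic_on ball 0 r"
    "\<forall>\<zeta>\<in>ball 0 r - {0}. f \<zeta> = \<zeta> powi m * h \<zeta>"
    using assms(1) unfolding og_def by blast
  have "\<forall>\<zeta>\<in>ball 0 (min r r0) - {0}. g \<zeta> = \<zeta> powi m * h \<zeta>"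
  proof
    fix \<zeta> :: complex assume z: "\<zeta> \<in> ball 0 (min r r0) - {0}"
    then have "\<zeta> \<in> ball 0 r - {0}" "\<zeta> \<in> ball 0 r0 - {0}" by auto
    then show "g \<zeta> = \<zeta> powi m * h \<zeta>" using r(4) assms(3) by metis
  qed
  moreover have "h holomorphic_on ball 0 (min r r0)"
    by (rule holomorphic_on_subset[OF r(3)]) auto
  moreover have "ball 0 (min r r0) \<subseteq> S" using r(2) by auto
  ultimately show ?thesis unfolding og_def using r(1) assms(2)
    by (intro exI[of _ "min r r0"]) auto
qed

lemma og_add:
  assumes "og S f m" "og S g m"
  shows "og S (\<lambda>\<zeta>. f \<zeta> + g \<zeta>) m"
proof -
  obtain r h where r: "r > 0" "ball 0 r \<subseteq> S" "h holomorphic_on ball 0 r"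
    "\<forall>\<zeta>\<in>ball 0 r - {0}. f \<zeta> = \<zeta> powi m * h \<zeta>"
    using assms(1) unfolding og_def by blast
  obtain r' h' where r': "r' > 0" "ball 0 r' \<subseteq> S" "h' holomorphic_on ball 0 r'"
    "\<forall>\<zeta>\<in>ball 0 r' - {0}. g \<zeta> = \<zeta> powi m * h' \<zeta>"
    using assms(2) unfolding og_def by blast
  have "(\<lambda>\<zeta>. h \<zeta> + h' \<zeta>) holomorphic_on ball 0 (min r r')"
    by (intro holomorphic_intros holomorphic_on_subset[OF r(3)] holomorphic_on_subset[OF r'(3)]) auto
  then show ?thesis unfolding og_def
    apply (intro exI[of _ "min r r'"])
    using r r' by (auto intro!: exI[of _ "\<lambda>\<zeta>. h \<zeta> + h' \<zeta>"] simp: algebra_simps)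
qed

lemma og_cmult:
  assumes "og S f m"
  shows "og S (\<lambda>\<zeta>. c * f \<zeta>) m"
proof -
  obtain r h where r: "r > 0" "ball 0 r \<subseteq> S" "h holomorphic_on ball 0 r"
    "\<forall>\<zeta>\<in>ball 0 r - {0}. f \<zeta> = \<zeta> powi m * h \<zeta>"
    using assms(1) unfolding og_def by blast
  have "(\<lambda>\<zeta>. c * h \<zeta>) holomorphic_on ball 0 r"
    by (intro holomorphic_intros r(3))
  then show ?thesis unfolding og_def
    using r by (auto intro!: exI[of _ r] exI[of _ "\<lambda>\<zeta>. c * h \<zeta>"] simp: algebra_simps)
qed

lemma og_const_pow:
  assumes "r > 0" "ball 0 r \<subseteq> S"
  shows "og S (\<lambda>\<zeta>. \<zeta> powi m * y) m"
  unfolding og_def using assms by (auto intro!: exI[of _ r] exI[of _ "\<lambda>_. y"])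

lemma og_zero:
  assumes "r > 0" "ball 0 r \<subseteq> S"
  shows "og S (\<lambda>\<zeta>. 0) m"
  using og_const_pow[OF assms, of m 0] by simp

lemma og_mono:
  assumes "og S f m'" "m \<le> m'"
  shows "og S f m"
proof -
  obtain r h where r: "r > 0" "ball 0 r \<subseteq> S" "h holomorphic_on ball 0 r"
    "\<forall>\<zeta>\<in>ball 0 r - {0}. f \<zeta> = \<zeta> powi m' * h \<zeta>"
    using assms(1) unfolding og_def by blast
  define k where "k = nat (m' - m)"
  have k: "int k = m' - m" using assms(2) unfolding k_def by simp
  have "(\<lambda>\<zeta>. \<zeta> ^ k * h \<zeta>) holomorphic_on ball 0 r"
    by (intro holomorphic_intros r(3))
  moreover have "f \<zeta> = \<zeta> powi m * (\<zeta> ^ k * h \<zeta>)" if "\<zeta> \<in> ball 0 r - {0}" for \<zeta>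
  proof -
    have "\<zeta> powi m' = \<zeta> powi (m + int k)" using k by simp
    also have "\<dots> = \<zeta> powi m * \<zeta> ^ k" using that by (simp add: power_int_add)
    finally show ?thesis using r(4) that by (simp add: mult.assoc)
  qed
  ultimately show ?thesis unfolding og_def using r by blast
qed

lemma og_lead:
  assumes "og S f m"
  shows "\<exists>y. og S (\<lambda>\<zeta>. f \<zeta> - \<zeta> powi m * y) (m + 1)"
proof -
  obtain r h where r: "r > 0" "ball 0 r \<subseteq> S" "h holomorphic_on ball 0 r"
    "\<forall>\<zeta>\<in>ball 0 r - {0}. f \<zeta> = \<zeta> powi m * h \<zeta>"
    using assms(1) unfolding og_def by blast
  define g where "g = (\<lambda>z. if z = 0 then deriv h 0 else (h z - h 0) / (z - 0))"
  have g: "g holomorphic_on ball 0 r"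
    unfolding g_def by (rule pole_lemma[OF r(3)]) (use r(1) in auto)
  have "f \<zeta> - \<zeta> powi m * h 0 = \<zeta> powi (m + 1) * g \<zeta>" if "\<zeta> \<in> ball 0 r - {0}" for \<zeta>
  proof -
    have nz: "\<zeta> \<noteq> 0" using that by auto
    have "\<zeta> powi (m + 1) * g \<zeta> = \<zeta> powi m * \<zeta> * ((h \<zeta> - h 0) / \<zeta>)"
      using nz by (simp add: g_def power_int_add_1)
    also have "\<dots> = \<zeta> powi m * (h \<zeta> - h 0)" using nz by simp
    finally show ?thesis using r(4) that by (simp add: algebra_simps)
  qed
  then show ?thesis unfolding og_def using r g by blast
qed

lemma og_unique:
  assumes "og S (\<lambda>\<zeta>. \<zeta> powi m * y) (m + 1)"
  shows "y = 0"
proof -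
  obtain r h where r: "r > 0" "ball 0 r \<subseteq> S" "h holomorphic_on ball 0 r"
    "\<forall>\<zeta>\<in>ball 0 r - {0}. \<zeta> powi m * y = \<zeta> powi (m + 1) * h \<zeta>"
    using assms(1) unfolding og_def by blast
  have eq: "\<zeta> * h \<zeta> = y" if "\<zeta> \<in> ball 0 r - {0}" for \<zeta>
  proof -
    have nz: "\<zeta> \<noteq> 0" using that by auto
    have "\<zeta> powi m * y = \<zeta> powi m * (\<zeta> * h \<zeta>)"
      using r(4) that nz by (simp add: power_int_add algebra_simps)
    then show ?thesis using nz by simp
  qed
  have "isCont h 0"
    by (rule continuous_on_interior[OF holomorphic_on_imp_continuous_on[OF r(3)]])
       (use r(1) in simp)
  then have "((\<lambda>\<zeta>. \<zeta> * h \<zeta>) \<longlongrightarrow> 0 * h 0) (at 0)"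
    by (intro tendsto_intros) (auto simp: isCont_def)
  then have lim: "((\<lambda>\<zeta>. \<zeta> * h \<zeta>) \<longlongrightarrow> 0) (at 0)" by simp
  have ev: "eventually (\<lambda>\<zeta>. \<zeta> * h \<zeta> = y) (at 0)"
    unfolding eventually_at using r(1) eq by (auto intro!: exI[of _ r] simp: dist_norm)
  have "((\<lambda>\<zeta>. y) \<longlongrightarrow> 0) (at (0::complex))"
    using tendsto_cong[OF ev] lim by simp
  then show ?thesis by (simp add: tendsto_const_iff)
qed

lemma og_ball: "og S f m \<Longrightarrow> \<exists>r>0. ball 0 r \<subseteq> S"
  unfolding og_def by blast

lemma in_chart_inv:
  assumes "\<zeta> \<in> \<phi> ` U"
  shows "\<phi> (inv_into U \<phi> \<zeta>) = \<zeta>"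
  using assms by (rule f_inv_into_f)

lemma ord_ge_add:
  "ord_ge U \<phi> f m \<Longrightarrow> ord_ge U \<phi> g m \<Longrightarrow> ord_ge U \<phi> (\<lambda>x. f x + g x) m"
  by (simp add: ord_ge_og in_chart_def og_add)

lemma ord_ge_msc:
  "ord_ge U \<phi> f m \<Longrightarrow> ord_ge U \<phi> (\<lambda>x. msc c (f x)) m"
  by (simp add: ord_ge_og in_chart_def og_cmult)

lemma ord_ge_diff:
  assumes "ord_ge U \<phi> f m" "ord_ge U \<phi> g m"
  shows "ord_ge U \<phi> (\<lambda>x. f x - g x) m"
proof -
  have "ord_ge U \<phi> (\<lambda>x. f x + msc (-1) (g x)) m"
    by (intro ord_ge_add ord_ge_msc assms)
  moreover have "(\<lambda>x. f x + msc (-1) (g x)) = (\<lambda>x. f x - g x)"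
    by (auto simp: vec_eq_iff)
  ultimately show ?thesis by simp
qed

lemma ord_ge_zero:
  "\<exists>r>0. ball 0 r \<subseteq> \<phi> ` U \<Longrightarrow> ord_ge U \<phi> (\<lambda>x. 0) m"
  by (auto simp: ord_ge_og in_chart_def intro: og_zero)

lemma ord_ge_mono:
  "ord_ge U \<phi> f m' \<Longrightarrow> m \<le> m' \<Longrightarrow> ord_ge U \<phi> f m"
  by (meson og_mono ord_ge_og)

lemma ord_ge_Z:
  assumes "\<exists>r>0. ball 0 r \<subseteq> \<phi> ` U"
  shows "ord_ge U \<phi> (\<lambda>x. msc (\<phi> x powi m) Y) m"
  unfolding ord_ge_og
proof (intro allI)
  fix i j
  obtain r where r: "r > 0" "ball 0 r \<subseteq> \<phi> ` U" using assms by blast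
  have "og (\<phi> ` U) (\<lambda>\<zeta>. \<zeta> powi m * Y $ i $ j) m" by (rule og_const_pow[OF r])
  then show "og (\<phi> ` U) (\<lambda>\<zeta>. in_chart U \<phi> (\<lambda>x. msc (\<phi> x powi m) Y) \<zeta> $ i $ j) m"
    by (rule og_cong[OF _ r(1)]) (use r in \<open>auto simp: in_chart_def in_chart_inv\<close>)
qed

lemma ord_Z_zero:
  assumes "ord_ge U \<phi> (\<lambda>x. msc (\<phi> x powi m) Y) (m + 1)"
  shows "Y = 0"
proof -
  have "Y $ i $ j = 0" for i j
  proof -
    have o: "og (\<phi> ` U) (\<lambda>\<zeta>. in_chart U \<phi> (\<lambda>x. msc (\<phi> x powi m) Y) \<zeta> $ i $ j) (m + 1)"
      using assms unfolding ord_ge_og by blast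
    obtain r where r: "r > 0" "ball 0 r \<subseteq> \<phi> ` U" using og_ball[OF o] by blast
    have "og (\<phi> ` U) (\<lambda>\<zeta>. \<zeta> powi m * Y $ i $ j) (m + 1)"
      by (rule og_cong[OF o r(1)]) (use r in \<open>auto simp: in_chart_def in_chart_inv\<close>)
    then show ?thesis by (rule og_unique)
  qed
  then show ?thesis by (simp add: vec_eq_iff)
qed

lemma ord_lead:
  assumes "ord_ge U \<phi> L m"
  shows "\<exists>Y. ord_ge U \<phi> (\<lambda>x. L x - msc (\<phi> x powi m) Y) (m + 1)"
proof -
  have "\<forall>i j. \<exists>y. og (\<phi> ` U) (\<lambda>\<zeta>. in_chart U \<phi> L \<zeta> $ i $ j - \<zeta> powi m * y) (m + 1)"
    using assms og_lead unfolding ord_ge_og by blast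
  then obtain y where y: "\<And>i j. og (\<phi> ` U) (\<lambda>\<zeta>. in_chart U \<phi> L \<zeta> $ i $ j - \<zeta> powi m * y i j) (m + 1)"
    by metis
  define Y where "Y = (\<chi> i j. y i j)"
  have "og (\<phi> ` U) (\<lambda>\<zeta>. in_chart U \<phi> (\<lambda>x. L x - msc (\<phi> x powi m) Y) \<zeta> $ i $ j) (m + 1)" for i j
  proof -
    obtain r where r: "r > 0" "ball 0 r \<subseteq> \<phi> ` U" using og_ball[OF y[of i j]] by blast
    show ?thesis
      by (rule og_cong[OF y[of i j] r(1)]) (use r in \<open>auto simp: in_chart_def in_chart_inv Y_def\<close>)
  qed
  then show ?thesis unfolding ord_ge_og by blast
qed

lemma ord_lead_unique:
  assumes "ord_ge U \<phi> (\<lambda>x. L x - msc (\<phi> x powi m) Y1) (m + 1)"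
    and "ord_ge U \<phi> (\<lambda>x. L x - msc (\<phi> x powi m) Y2) (m + 1)"
  shows "Y1 = Y2"
proof -
  have "ord_ge U \<phi> (\<lambda>x. (L x - msc (\<phi> x powi m) Y1) - (L x - msc (\<phi> x powi m) Y2)) (m + 1)"
    by (rule ord_ge_diff[OF assms])
  moreover have "(\<lambda>x. (L x - msc (\<phi> x powi m) Y1) - (L x - msc (\<phi> x powi m) Y2))
      = (\<lambda>x. msc (\<phi> x powi m) (Y2 - Y1))"
    by (auto simp: vec_eq_iff algebra_simps)
  ultimately have "Y2 - Y1 = 0" using ord_Z_zero by metis
  then show ?thesis by simp
qed

lemma mat_holo_add:
  "mat_holo_on H1 S1 \<Longrightarrow> mat_holo_on H2 S2 \<Longrightarrow> S \<subseteq> S1 \<Longrightarrow> S \<subseteq> S2 \<Longrightarrow>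
   mat_holo_on (\<lambda>\<zeta>. H1 \<zeta> + H2 \<zeta>) S"
  unfolding mat_holo_on_def
proof (intro allI)
  fix i j
  assume "\<forall>i j. (\<lambda>\<zeta>. H1 \<zeta> $ i $ j) holomorphic_on S1" "\<forall>i j. (\<lambda>\<zeta>. H2 \<zeta> $ i $ j) holomorphic_on S2"
    "S \<subseteq> S1" "S \<subseteq> S2"
  then have "(\<lambda>\<zeta>. H1 \<zeta> $ i $ j) holomorphic_on S" "(\<lambda>\<zeta>. H2 \<zeta> $ i $ j) holomorphic_on S"
    using holomorphic_on_subset by blast+
  then show "(\<lambda>\<zeta>. (H1 \<zeta> + H2 \<zeta>) $ i $ j) holomorphic_on S"
    by (simp add: holomorphic_on_add)
qed

lemma mat_holo_msc:
  "mat_holo_on H1 S1 \<Longrightarrow> S \<subseteq> S1 \<Longrightarrow> mat_holo_on (\<lambda>\<zeta>. msc c (H1 \<zeta>)) S"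
  unfolding mat_holo_on_def
proof (intro allI)
  fix i j
  assume "\<forall>i j. (\<lambda>\<zeta>. H1 \<zeta> $ i $ j) holomorphic_on S1" "S \<subseteq> S1"
  then have "(\<lambda>\<zeta>. H1 \<zeta> $ i $ j) holomorphic_on S"
    using holomorphic_on_subset by blast
  then show "(\<lambda>\<zeta>. msc c (H1 \<zeta>) $ i $ j) holomorphic_on S"
    by (simp add: holomorphic_on_mult holomorphic_on_const)
qed

lemma mat_holo_zero: "mat_holo_on (\<lambda>\<zeta>. 0) S"
  unfolding mat_holo_on_def by auto

lemma deriv_mat_add:
  assumes "mat_holo_on H1 (ball 0 r1)" "mat_holo_on H2 (ball 0 r2)" "r1 > 0" "r2 > 0"
  shows "(\<chi> i j. deriv (\<lambda>\<zeta>. H1 \<zeta> $ i $ j + H2 \<zeta> $ i $ j) 0) =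
         (\<chi> i j. deriv (\<lambda>\<zeta>. H1 \<zeta> $ i $ j) 0) + (\<chi> i j. deriv (\<lambda>\<zeta>. H2 \<zeta> $ i $ j) 0)"
proof -
  have d1: "(\<lambda>\<zeta>. H1 \<zeta> $ i $ j) field_differentiable at 0" for i j
    using assms(1,3) unfolding mat_holo_on_def
    by (intro holomorphic_on_imp_differentiable_at[of _ "ball 0 r1"]) auto
  have d2: "(\<lambda>\<zeta>. H2 \<zeta> $ i $ j) field_differentiable at 0" for i j
    using assms(2,4) unfolding mat_holo_on_def
    by (intro holomorphic_on_imp_differentiable_at[of _ "ball 0 r2"]) auto
  show ?thesis by (simp add: vec_eq_iff deriv_add[OF d1 d2])
qed

lemma deriv_mat_msc:
  assumes "mat_holo_on H1 (ball 0 r1)" "r1 > 0"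
  shows "(\<chi> i j. deriv (\<lambda>\<zeta>. c * H1 \<zeta> $ i $ j) 0) =
         msc c (\<chi> i j. deriv (\<lambda>\<zeta>. H1 \<zeta> $ i $ j) 0)"
proof -
  have d1: "(\<lambda>\<zeta>. H1 \<zeta> $ i $ j) field_differentiable at 0" for i j
    using assms(1,2) unfolding mat_holo_on_def
    by (intro holomorphic_on_imp_differentiable_at[of _ "ball 0 r1"]) auto
  show ?thesis by (simp add: vec_eq_iff deriv_cmult[OF d1])
qed

lemma chi0:
  shows "(\<chi> (i::'n::finite) (j::'n). (0::complex)) = 0"
  by (simp add: vec_eq_iff)

lemma tc_zero:
  fixes a :: "complex^'n::finite" and kind :: "'n liekind"
  assumes "\<exists>r>0. ball 0 r \<subseteq> w ` U"
  shows "tyurin_cond kind U w a (\<lambda>x. 0)"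
proof -
  obtain r where r: "r > 0" "ball 0 r \<subseteq> w ` U" using assms by blast
  show ?thesis
  proof (cases kind)
    case GL
    show ?thesis unfolding GL tyurin_cond.simps
      apply (rule exI[of _ r]) using r
      by (auto intro!: exI[of _ "0::complex^'n"] exI[of _ "0::complex"] exI[of _ "\<lambda>_. 0::'n cmat"]
        simp: in_chart_def mat_holo_zero bil_def outer_def vec_eq_iff)
  next
    case SL
    show ?thesis unfolding SL tyurin_cond.simps
      apply (rule exI[of _ r]) using r
      by (auto intro!: exI[of _ "0::complex^'n"] exI[of _ "0::complex"] exI[of _ "\<lambda>_. 0::'n cmat"]
        simp: in_chart_def mat_holo_zero bil_def outer_def vec_eq_iff)
  next
    case SO
    show ?thesis unfolding SO tyurin_cond.simps
      apply (rule exI[of _ r]) using r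
      by (auto intro!: exI[of _ "0::complex^'n"] exI[of _ "0::complex"] exI[of _ "\<lambda>_. 0::'n cmat"]
        simp: in_chart_def mat_holo_zero bil_def outer_def vec_eq_iff)
  next
    case (SP \<sigma>)
    show ?thesis unfolding SP tyurin_cond.simps
      apply (rule exI[of _ r]) using r
      by (auto intro!: exI[of _ "0::complex^'n"] exI[of _ "0::complex"] exI[of _ "\<lambda>_. 0::'n cmat"]
        simp: in_chart_def mat_holo_zero bil_def outer_def vec_eq_iff chi0)
  qed
qed

lemma tc_add:
  assumes T1: "tyurin_cond kind U w a L1" and T2: "tyurin_cond kind U w a L2"
  shows "tyurin_cond kind U w a (\<lambda>x. L1 x + L2 x)"
proof (cases kind)
  case GL
  obtain r1 b1 \<kappa>1 H1 where A: "r1>0" "ball 0 r1 \<subseteq> w ` U" "mat_holo_on H1 (ball 0 r1)"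
    "\<forall>\<zeta>\<in>ball 0 r1 - {0}. in_chart U w L1 \<zeta> = msc (1/\<zeta>) (outer a b1) + H1 \<zeta>"
    "bil b1 a = 0" "H1 0 *v a = \<kappa>1 *s a" using T1 GL by auto
  obtain r2 b2 \<kappa>2 H2 where B: "r2>0" "ball 0 r2 \<subseteq> w ` U" "mat_holo_on H2 (ball 0 r2)"
    "\<forall>\<zeta>\<in>ball 0 r2 - {0}. in_chart U w L2 \<zeta> = msc (1/\<zeta>) (outer a b2) + H2 \<zeta>"
    "bil b2 a = 0" "H2 0 *v a = \<kappa>2 *s a" using T2 GL by auto
  show ?thesis using GL A B
    by (simp, intro exI[of _ "min r1 r2"] conjI exI[of _ "b1 + b2"] exI[of _ "\<kappa>1 + \<kappa>2"]
        exI[of _ "\<lambda>\<zeta>. H1 \<zeta> + H2 \<zeta>"])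
       (auto simp: in_chart_def outer_add_right msc_add bil_add_left matrix_vector_mult_add_rdistrib
         vector_sadd_rdistrib algebra_simps intro!: mat_holo_add)
next
  case SL
  obtain r1 b1 \<kappa>1 H1 where A: "r1>0" "ball 0 r1 \<subseteq> w ` U" "mat_holo_on H1 (ball 0 r1)"
    "\<forall>\<zeta>\<in>ball 0 r1 - {0}. in_chart U w L1 \<zeta> = msc (1/\<zeta>) (outer a b1) + H1 \<zeta>"
    "bil b1 a = 0" "H1 0 *v a = \<kappa>1 *s a" using T1 SL by auto
  obtain r2 b2 \<kappa>2 H2 where B: "r2>0" "ball 0 r2 \<subseteq> w ` U" "mat_holo_on H2 (ball 0 r2)"
    "\<forall>\<zeta>\<in>ball 0 r2 - {0}. in_chart U w L2 \<zeta> = msc (1/\<zeta>) (outer a b2) + H2 \<zeta>"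
    "bil b2 a = 0" "H2 0 *v a = \<kappa>2 *s a" using T2 SL by auto
  show ?thesis using SL A B
    by (simp, intro exI[of _ "min r1 r2"] conjI exI[of _ "b1 + b2"] exI[of _ "\<kappa>1 + \<kappa>2"]
        exI[of _ "\<lambda>\<zeta>. H1 \<zeta> + H2 \<zeta>"])
       (auto simp: in_chart_def outer_add_right msc_add bil_add_left matrix_vector_mult_add_rdistrib
         vector_sadd_rdistrib algebra_simps intro!: mat_holo_add)
next
  case SO
  obtain r1 b1 \<kappa>1 H1 where A: "r1>0" "ball 0 r1 \<subseteq> w ` U" "mat_holo_on H1 (ball 0 r1)"
    "\<forall>\<zeta>\<in>ball 0 r1 - {0}. in_chart U w L1 \<zeta> = msc (1/\<zeta>) (outer a b1 - outer b1 a) + H1 \<zeta>"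
    "bil b1 a = 0" "H1 0 *v a = \<kappa>1 *s a" using T1 SO by auto
  obtain r2 b2 \<kappa>2 H2 where B: "r2>0" "ball 0 r2 \<subseteq> w ` U" "mat_holo_on H2 (ball 0 r2)"
    "\<forall>\<zeta>\<in>ball 0 r2 - {0}. in_chart U w L2 \<zeta> = msc (1/\<zeta>) (outer a b2 - outer b2 a) + H2 \<zeta>"
    "bil b2 a = 0" "H2 0 *v a = \<kappa>2 *s a" using T2 SO by auto
  show ?thesis using SO A B
    by (simp, intro exI[of _ "min r1 r2"] conjI exI[of _ "b1 + b2"] exI[of _ "\<kappa>1 + \<kappa>2"]
        exI[of _ "\<lambda>\<zeta>. H1 \<zeta> + H2 \<zeta>"])
       (auto simp: in_chart_def outer_add_right outer_add_left msc_add msc_diff bil_add_left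
         matrix_vector_mult_add_rdistrib vector_sadd_rdistrib algebra_simps intro!: mat_holo_add)
next
  case (SP \<sigma>)
  obtain r1 b1 \<nu>1 \<kappa>1 H1 where A: "r1>0" "ball 0 r1 \<subseteq> w ` U" "mat_holo_on H1 (ball 0 r1)"
    "\<forall>\<zeta>\<in>ball 0 r1 - {0}. in_chart U w L1 \<zeta> =
          msc (1/\<zeta>^2) (msc \<nu>1 (outer a a ** \<sigma>)) + msc (1/\<zeta>) ((outer a b1 + outer b1 a) ** \<sigma>) + H1 \<zeta>"
    "bil b1 (\<sigma> *v a) = 0" "H1 0 *v a = \<kappa>1 *s a"
    "bil a (\<sigma> *v ((\<chi> i j. deriv (\<lambda>\<zeta>. H1 \<zeta> $ i $ j) 0) *v a)) = 0"
    using T1 SP by auto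
  obtain r2 b2 \<nu>2 \<kappa>2 H2 where B: "r2>0" "ball 0 r2 \<subseteq> w ` U" "mat_holo_on H2 (ball 0 r2)"
    "\<forall>\<zeta>\<in>ball 0 r2 - {0}. in_chart U w L2 \<zeta> =
          msc (1/\<zeta>^2) (msc \<nu>2 (outer a a ** \<sigma>)) + msc (1/\<zeta>) ((outer a b2 + outer b2 a) ** \<sigma>) + H2 \<zeta>"
    "bil b2 (\<sigma> *v a) = 0" "H2 0 *v a = \<kappa>2 *s a"
    "bil a (\<sigma> *v ((\<chi> i j. deriv (\<lambda>\<zeta>. H2 \<zeta> $ i $ j) 0) *v a)) = 0"
    using T2 SP by auto
  have d: "(\<chi> i j. deriv (\<lambda>\<zeta>. H1 \<zeta> $ i $ j + H2 \<zeta> $ i $ j) 0) =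
         (\<chi> i j. deriv (\<lambda>\<zeta>. H1 \<zeta> $ i $ j) 0) + (\<chi> i j. deriv (\<lambda>\<zeta>. H2 \<zeta> $ i $ j) 0)"
    by (rule deriv_mat_add[OF A(3) B(3) A(1) B(1)])
  show ?thesis unfolding SP tyurin_cond.simps
    apply (rule exI[of _ "min r1 r2"], rule conjI, use A B in simp, rule conjI, use A B in force)
    apply (rule exI[of _ "b1 + b2"], rule exI[of _ "\<nu>1 + \<nu>2"], rule exI[of _ "\<kappa>1 + \<kappa>2"],
        rule exI[of _ "\<lambda>\<zeta>. H1 \<zeta> + H2 \<zeta>"])
    using A B by (auto simp: in_chart_def outer_add_right outer_add_left msc_add msc_add_left bil_add_left
         matrix_add_rdistrib' matrix_add_ldistrib
         matrix_vector_mult_add_rdistrib matrix_vector_right_distrib bil_add_right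
         vector_sadd_rdistrib d algebra_simps intro!: mat_holo_add)
qed

lemma tc_msc:
  assumes T1: "tyurin_cond kind U w a L1"
  shows "tyurin_cond kind U w a (\<lambda>x. msc c (L1 x))"
proof (cases kind)
  case GL
  obtain r1 b1 \<kappa>1 H1 where A: "r1>0" "ball 0 r1 \<subseteq> w ` U" "mat_holo_on H1 (ball 0 r1)"
    "\<forall>\<zeta>\<in>ball 0 r1 - {0}. in_chart U w L1 \<zeta> = msc (1/\<zeta>) (outer a b1) + H1 \<zeta>"
    "bil b1 a = 0" "H1 0 *v a = \<kappa>1 *s a" using T1 GL by auto
  show ?thesis using GL A
    by (simp, intro exI[of _ r1] conjI exI[of _ "c *s b1"] exI[of _ "c * \<kappa>1"]
        exI[of _ "\<lambda>\<zeta>. msc c (H1 \<zeta>)"])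
       (auto simp: in_chart_def outer_scale_right msc_add bil_scale_left msc_mv
         intro!: mat_holo_msc)
next
  case SL
  obtain r1 b1 \<kappa>1 H1 where A: "r1>0" "ball 0 r1 \<subseteq> w ` U" "mat_holo_on H1 (ball 0 r1)"
    "\<forall>\<zeta>\<in>ball 0 r1 - {0}. in_chart U w L1 \<zeta> = msc (1/\<zeta>) (outer a b1) + H1 \<zeta>"
    "bil b1 a = 0" "H1 0 *v a = \<kappa>1 *s a" using T1 SL by auto
  show ?thesis using SL A
    by (simp, intro exI[of _ r1] conjI exI[of _ "c *s b1"] exI[of _ "c * \<kappa>1"]
        exI[of _ "\<lambda>\<zeta>. msc c (H1 \<zeta>)"])
       (auto simp: in_chart_def outer_scale_right msc_add bil_scale_left msc_mv
         intro!: mat_holo_msc)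
next
  case SO
  obtain r1 b1 \<kappa>1 H1 where A: "r1>0" "ball 0 r1 \<subseteq> w ` U" "mat_holo_on H1 (ball 0 r1)"
    "\<forall>\<zeta>\<in>ball 0 r1 - {0}. in_chart U w L1 \<zeta> = msc (1/\<zeta>) (outer a b1 - outer b1 a) + H1 \<zeta>"
    "bil b1 a = 0" "H1 0 *v a = \<kappa>1 *s a" using T1 SO by auto
  show ?thesis using SO A
    by (simp, intro exI[of _ r1] conjI exI[of _ "c *s b1"] exI[of _ "c * \<kappa>1"]
        exI[of _ "\<lambda>\<zeta>. msc c (H1 \<zeta>)"])
       (auto simp: in_chart_def outer_scale_right outer_scale_left msc_add msc_diff bil_scale_left msc_mv
         mult.commute intro!: mat_holo_msc)
next
  case (SP \<sigma>)
  obtain r1 b1 \<nu>1 \<kappa>1 H1 where A: "r1>0" "ball 0 r1 \<subseteq> w ` U" "mat_holo_on H1 (ball 0 r1)"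
    "\<forall>\<zeta>\<in>ball 0 r1 - {0}. in_chart U w L1 \<zeta> =
          msc (1/\<zeta>^2) (msc \<nu>1 (outer a a ** \<sigma>)) + msc (1/\<zeta>) ((outer a b1 + outer b1 a) ** \<sigma>) + H1 \<zeta>"
    "bil b1 (\<sigma> *v a) = 0" "H1 0 *v a = \<kappa>1 *s a"
    "bil a (\<sigma> *v ((\<chi> i j. deriv (\<lambda>\<zeta>. H1 \<zeta> $ i $ j) 0) *v a)) = 0"
    using T1 SP by auto
  have d: "(\<chi> i j. deriv (\<lambda>\<zeta>. c * H1 \<zeta> $ i $ j) 0) =
         msc c (\<chi> i j. deriv (\<lambda>\<zeta>. H1 \<zeta> $ i $ j) 0)"
    by (rule deriv_mat_msc[OF A(3) A(1)])
  have e: "(outer a (c *s b1) + outer (c *s b1) a) ** \<sigma> = msc c ((outer a b1 + outer b1 a) ** \<sigma>)"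
    by (simp add: outer_scale_right outer_scale_left msc_add[symmetric] msc_mult_right)
  have mv: "\<sigma> *v (c *s v) = c *s (\<sigma> *v v)" for v :: "complex^'a"
    by (simp add: vec_eq_iff matrix_vector_mult_def sum_distrib_left algebra_simps)
  show ?thesis unfolding SP tyurin_cond.simps
    apply (rule exI[of _ r1], rule conjI, use A in simp, rule conjI, use A in simp)
    apply (rule exI[of _ "c *s b1"], rule exI[of _ "c * \<nu>1"], rule exI[of _ "c * \<kappa>1"],
        rule exI[of _ "\<lambda>\<zeta>. msc c (H1 \<zeta>)"])
    using A by (auto simp: in_chart_def e msc_add msc_add_left bil_scale_left
         bil_scale_right msc_mult_right msc_mv mv d mult.commute intro!: mat_holo_msc)
qed

lemma comb_closed:
  assumes "(\<lambda>x. 0) \<in> S" "\<And>L1 L2. L1 \<in> S \<Longrightarrow> L2 \<in> S \<Longrightarrow> (\<lambda>x. L1 x + L2 x) \<in> S"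
    "\<And>c L. L \<in> S \<Longrightarrow> (\<lambda>x. msc c (L x)) \<in> S" "finite F" "\<forall>i\<in>F. f i \<in> S"
  shows "(\<lambda>x. \<Sum>i\<in>F. msc (c i) (f i x)) \<in> S"
  using assms(4,5)
proof (induction F rule: finite_induct)
  case empty
  then show ?case using assms(1) by simp
next
  case (insert i F)
  have "(\<lambda>x. msc (c i) (f i x) + (\<Sum>i\<in>F. msc (c i) (f i x))) \<in> S"
    using insert assms(2,3) by auto
  then show ?case using insert by simp
qed

lemma local_coord_ball:
  assumes "local_coord atlas U \<phi> P"
  shows "\<exists>r>0. ball 0 r \<subseteq> \<phi> ` U"
proof -
  have "open (\<phi> ` U)" "0 \<in> \<phi> ` U"
    using assms unfolding local_coord_def is_chart_def by (auto intro!: image_eqI[of 0 \<phi> P])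
  then show ?thesis using open_contains_ball by blast
qed

lemma iso_from_holo:
  assumes "is_chart V \<psi>" "finite S" "x \<in> V" "f holomorphic_on \<psi> ` (V - S)"
  shows "isolated_singularity_at f (\<psi> x)"
proof -
  define T where "T = \<psi> ` (V \<inter> S) - {\<psi> x}"
  define s where "s = \<psi> ` V - T"
  have "open (\<psi> ` V)" using assms(1) unfolding is_chart_def by blast
  moreover have "finite T" unfolding T_def using assms(2) by auto
  ultimately have "open s" unfolding s_def by (intro open_Diff finite_imp_closed)
  moreover have "\<psi> x \<in> s" unfolding s_def T_def using assms(3) by auto
  moreover have "s - {\<psi> x} \<subseteq> \<psi> ` (V - S)"
    unfolding s_def T_def by auto
  ultimately show ?thesis
    using isolated_singularity_at_holomorphic holomorphic_on_subset[OF assms(4)] by metis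
qed

lemma ness_add:
  assumes "isolated_singularity_at f z" "isolated_singularity_at g z"
    "not_essential f z" "not_essential g z"
  shows "not_essential (\<lambda>w. f w + g w) z"
proof -
  have "(\<lambda>x. f (z + x)) has_laurent_expansion laurent_expansion f z"
    by (rule not_essential_has_laurent_expansion[OF assms(1,3)])
  moreover have "(\<lambda>x. g (z + x)) has_laurent_expansion laurent_expansion g z"
    by (rule not_essential_has_laurent_expansion[OF assms(2,4)])
  ultimately have "(\<lambda>x. f (z + x) + g (z + x)) has_laurent_expansion
      laurent_expansion f z + laurent_expansion g z"
    by (rule has_laurent_expansion_add)
  then show ?thesis
    by (rule has_laurent_expansion_not_essential[where f="\<lambda>w. f w + g w"])
qed

lemma ness_cmult:
  assumes "isolated_singularity_at f z" "not_essential f z"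
  shows "not_essential (\<lambda>w. c * f w) z"
proof -
  have "(\<lambda>x. f (z + x)) has_laurent_expansion laurent_expansion f z"
    by (rule not_essential_has_laurent_expansion[OF assms(1,2)])
  then have "(\<lambda>x. c * f (z + x)) has_laurent_expansion fls_const c * laurent_expansion f z"
    by (rule has_laurent_expansion_cmult_left)
  then show ?thesis
    by (rule has_laurent_expansion_not_essential[where f="\<lambda>w. c * f w"])
qed

lemma merom_add:
  assumes ch: "\<forall>(V,\<psi>)\<in>atlas. is_chart V \<psi>" and fin: "finite S"
    and M1: "merom_off atlas S L1" and M2: "merom_off atlas S L2"
  shows "merom_off atlas S (\<lambda>x. L1 x + L2 x)"
  unfolding merom_off_def
proof (rule conjI; clarify)
  fix V \<psi> assume Vp: "(V, \<psi>) \<in> atlas"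
  have "in_chart V \<psi> (\<lambda>x. L1 x + L2 x) = (\<lambda>\<zeta>. in_chart V \<psi> L1 \<zeta> + in_chart V \<psi> L2 \<zeta>)"
    by (simp add: in_chart_def)
  then show "mat_holo_on (in_chart V \<psi> (\<lambda>x. L1 x + L2 x)) (\<psi> ` (V - S))"
    using M1 M2 Vp unfolding merom_off_def by (auto intro: mat_holo_add)
next
  fix V \<psi> x i j assume Vp0: "(V, \<psi>) \<in> atlas" and x: "x \<in> V" "x \<in> S"
  define Vp where "Vp = (V, \<psi>)"
  have VV: "Vp = (V, \<psi>)" and Vp: "Vp \<in> atlas" using Vp0 by (auto simp: Vp_def)
  have c: "is_chart V \<psi>" using ch Vp VV by auto
  have h1: "(\<lambda>\<zeta>. in_chart V \<psi> L1 \<zeta> $ i $ j) holomorphic_on \<psi> ` (V - S)"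
    using M1 Vp VV unfolding merom_off_def mat_holo_on_def by auto
  have h2: "(\<lambda>\<zeta>. in_chart V \<psi> L2 \<zeta> $ i $ j) holomorphic_on \<psi> ` (V - S)"
    using M2 Vp VV unfolding merom_off_def mat_holo_on_def by auto
  have n1: "not_essential (\<lambda>\<zeta>. in_chart V \<psi> L1 \<zeta> $ i $ j) (\<psi> x)"
    using M1 Vp VV x unfolding merom_off_def by auto
  have n2: "not_essential (\<lambda>\<zeta>. in_chart V \<psi> L2 \<zeta> $ i $ j) (\<psi> x)"
    using M2 Vp VV x unfolding merom_off_def by auto
  have xV: "x \<in> V" using x by auto
  have "not_essential (\<lambda>\<zeta>. in_chart V \<psi> L1 \<zeta> $ i $ j + in_chart V \<psi> L2 \<zeta> $ i $ j) (\<psi> x)"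
    by (rule ness_add[OF iso_from_holo[OF c fin xV h1] iso_from_holo[OF c fin xV h2] n1 n2])
  then show "not_essential (\<lambda>\<zeta>. in_chart V \<psi> (\<lambda>x. L1 x + L2 x) \<zeta> $ i $ j) (\<psi> x)"
    by (simp add: in_chart_def)
qed

lemma merom_msc:
  assumes ch: "\<forall>(V,\<psi>)\<in>atlas. is_chart V \<psi>" and fin: "finite S"
    and M1: "merom_off atlas S L1"
  shows "merom_off atlas S (\<lambda>x. msc c (L1 x))"
  unfolding merom_off_def
proof (rule conjI; clarify)
  fix V \<psi> assume Vp: "(V, \<psi>) \<in> atlas"
  have "in_chart V \<psi> (\<lambda>x. msc c (L1 x)) = (\<lambda>\<zeta>. msc c (in_chart V \<psi> L1 \<zeta>))"
    by (simp add: in_chart_def)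
  then show "mat_holo_on (in_chart V \<psi> (\<lambda>x. msc c (L1 x))) (\<psi> ` (V - S))"
    using M1 Vp unfolding merom_off_def by (auto intro: mat_holo_msc)
next
  fix V \<psi> x i j assume Vp0: "(V, \<psi>) \<in> atlas" and x: "x \<in> V" "x \<in> S"
  define Vp where "Vp = (V, \<psi>)"
  have VV: "Vp = (V, \<psi>)" and Vp: "Vp \<in> atlas" using Vp0 by (auto simp: Vp_def)
  have c: "is_chart V \<psi>" using ch Vp VV by auto
  have h1: "(\<lambda>\<zeta>. in_chart V \<psi> L1 \<zeta> $ i $ j) holomorphic_on \<psi> ` (V - S)"
    using M1 Vp VV unfolding merom_off_def mat_holo_on_def by auto
  have n1: "not_essential (\<lambda>\<zeta>. in_chart V \<psi> L1 \<zeta> $ i $ j) (\<psi> x)"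
    using M1 Vp VV x unfolding merom_off_def by auto
  have xV: "x \<in> V" using x by auto
  have "not_essential (\<lambda>\<zeta>. c * in_chart V \<psi> L1 \<zeta> $ i $ j) (\<psi> x)"
    by (rule ness_cmult[OF iso_from_holo[OF c fin xV h1] n1])
  then show "not_essential (\<lambda>\<zeta>. in_chart V \<psi> (\<lambda>x. msc c (L1 x)) \<zeta> $ i $ j) (\<psi> x)"
    by (simp add: in_chart_def)
qed

lemma merom_zero: "merom_off atlas S (\<lambda>x. 0)"
  unfolding merom_off_def in_chart_def mat_holo_on_def
  by (auto intro: not_essential_const[unfolded zero_vec_def])

definition fsc :: "complex \<Rightarrow> (nat \<Rightarrow> 'n::finite cmat) \<Rightarrow> (nat \<Rightarrow> 'n cmat)" where
  "fsc c f = (\<lambda>p. msc c (f p))"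

lemma og_limit:
  assumes "og S (\<lambda>\<zeta>. f \<zeta> - \<zeta> powi m * y) (m + 1)"
  shows "((\<lambda>\<zeta>. \<zeta> powi (-m) * f \<zeta>) \<longlongrightarrow> y) (at 0)"
proof -
  obtain r h where r: "r > 0" "ball 0 r \<subseteq> S" "h holomorphic_on ball 0 r"
    "\<forall>\<zeta>\<in>ball 0 r - {0}. f \<zeta> - \<zeta> powi m * y = \<zeta> powi (m + 1) * h \<zeta>"
    using assms(1) unfolding og_def by blast
  have eq: "\<zeta> powi (-m) * f \<zeta> = y + \<zeta> * h \<zeta>" if "\<zeta> \<in> ball 0 r - {0}" for \<zeta>
  proof -
    have nz: "\<zeta> \<noteq> 0" using that by auto
    have pw: "\<zeta> powi (m + 1) = \<zeta> powi m * \<zeta>" using nz by (rule power_int_add_1[OF disjI1])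
    have "f \<zeta> - \<zeta> powi m * y = \<zeta> powi (m + 1) * h \<zeta>" using r(4) that by blast
    then have "f \<zeta> = \<zeta> powi m * (y + \<zeta> * h \<zeta>)"
      unfolding pw by (simp add: algebra_simps)
    then show ?thesis using nz by (simp add: power_int_minus field_simps)
  qed
  have "isCont h 0"
    by (rule continuous_on_interior[OF holomorphic_on_imp_continuous_on[OF r(3)]])
       (use r(1) in simp)
  then have "((\<lambda>\<zeta>. y + \<zeta> * h \<zeta>) \<longlongrightarrow> y + 0 * h 0) (at 0)"
    by (intro tendsto_intros) (auto simp: isCont_def)
  then have lim: "((\<lambda>\<zeta>. y + \<zeta> * h \<zeta>) \<longlongrightarrow> y) (at 0)" by simp
  have ev: "eventually (\<lambda>\<zeta>. y + \<zeta> * h \<zeta> = \<zeta> powi (-m) * f \<zeta>) (at 0)"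
    unfolding eventually_at using r(1) eq by (auto intro!: exI[of _ r] simp: dist_norm)
  show ?thesis using tendsto_cong[OF ev] lim by simp
qed

lemma ord_limit:
  assumes "ord_ge U \<phi> (\<lambda>x. L x - msc (\<phi> x powi m) Y) (m + 1)"
  shows "((\<lambda>\<zeta>. msc (\<zeta> powi (-m)) (in_chart U \<phi> L \<zeta>)) \<longlongrightarrow> Y) (at 0)"
proof (rule vec_tendstoI, rule vec_tendstoI)
  fix i j
  have o: "og (\<phi> ` U) (\<lambda>\<zeta>. in_chart U \<phi> (\<lambda>x. L x - msc (\<phi> x powi m) Y) \<zeta> $ i $ j) (m + 1)"
    using assms unfolding ord_ge_og by blast
  obtain r where r: "r > 0" "ball 0 r \<subseteq> \<phi> ` U" using og_ball[OF o] by blast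
  have "og (\<phi> ` U) (\<lambda>\<zeta>. in_chart U \<phi> L \<zeta> $ i $ j - \<zeta> powi m * Y $ i $ j) (m + 1)"
    by (rule og_cong[OF o r(1)]) (use r in \<open>auto simp: in_chart_def in_chart_inv\<close>)
  from og_limit[OF this]
  show "((\<lambda>x. msc (x powi - m) (in_chart U \<phi> L x) $ i $ j) \<longlongrightarrow> Y $ i $ j) (at 0)"
    by simp
qed

locale LS =
  fixes atlas :: "('a::t2_space set \<times> ('a \<Rightarrow> complex)) set"
    and kind :: "'n::finite liekind"
    and A :: "'a set" and K :: nat and \<gamma> :: "nat \<Rightarrow> 'a"
    and wU :: "nat \<Rightarrow> 'a set" and w :: "nat \<Rightarrow> 'a \<Rightarrow> complex" and \<alpha> :: "nat \<Rightarrow> complex^'n"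
    and N :: nat and zU :: "nat \<Rightarrow> 'a set" and z :: "nat \<Rightarrow> 'a \<Rightarrow> complex"
  assumes RS: "compact_riemann_surface atlas" and finA: "finite A"
    and wball: "\<forall>s\<in>{1..K}. \<exists>r>0. ball 0 r \<subseteq> w s ` wU s"
    and zball: "\<forall>p\<in>{1..N}. \<exists>r>0. ball 0 r \<subseteq> z p ` zU p"
begin

definition G where "G = lax_alg atlas kind A K \<gamma> wU w \<alpha>"
definition V where "V m = filt G N zU z m"

lemma charts: "\<forall>(U,\<phi>)\<in>atlas. is_chart U \<phi>"
  using RS unfolding compact_riemann_surface_def by auto

lemma finE: "finite (A \<union> \<gamma> ` {1..K})"
  using finA by auto


lemma G_iff: "L \<in> G \<longleftrightarrow> (\<forall>x. x \<notin> A \<union> \<gamma> ` {1..K} \<longrightarrow> L x \<in> lie_alg kind) \<and>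
        (\<forall>x\<in>A \<union> \<gamma> ` {1..K}. L x = 0) \<and>
        merom_off atlas (A \<union> \<gamma> ` {1..K}) L \<and>
        (\<forall>s\<in>{1..K}. tyurin_cond kind (wU s) (w s) (\<alpha> s) L)"
  unfolding G_def lax_alg_def by (rule mem_Collect_eq)

lemma G_zero: "(\<lambda>x. 0) \<in> G"
  unfolding G_iff
proof (intro conjI)
  show "\<forall>s\<in>{1..K}. tyurin_cond kind (wU s) (w s) (\<alpha> s) (\<lambda>x. 0)"
    using tc_zero wball by blast
qed (auto simp: lie_zero merom_zero)

lemma G_add: "L1 \<in> G \<Longrightarrow> L2 \<in> G \<Longrightarrow> (\<lambda>x. L1 x + L2 x) \<in> G"
  unfolding G_iff
proof (elim conjE, intro conjI)
  assume "merom_off atlas (A \<union> \<gamma> ` {1..K}) L1" "merom_off atlas (A \<union> \<gamma> ` {1..K}) L2"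
  then show "merom_off atlas (A \<union> \<gamma> ` {1..K}) (\<lambda>x. L1 x + L2 x)"
    by (rule merom_add[OF charts finE])
  assume "\<forall>s\<in>{1..K}. tyurin_cond kind (wU s) (w s) (\<alpha> s) L1"
    "\<forall>s\<in>{1..K}. tyurin_cond kind (wU s) (w s) (\<alpha> s) L2"
  then show "\<forall>s\<in>{1..K}. tyurin_cond kind (wU s) (w s) (\<alpha> s) (\<lambda>x. L1 x + L2 x)"
    using tc_add by blast
  assume "\<forall>x. x \<notin> A \<union> \<gamma> ` {1..K} \<longrightarrow> L1 x \<in> lie_alg kind"
    "\<forall>x. x \<notin> A \<union> \<gamma> ` {1..K} \<longrightarrow> L2 x \<in> lie_alg kind"
  then show "\<forall>x. x \<notin> A \<union> \<gamma> ` {1..K} \<longrightarrow> L1 x + L2 x \<in> lie_alg kind"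
    using lie_add by blast
  assume "\<forall>x\<in>A \<union> \<gamma> ` {1..K}. L1 x = 0" "\<forall>x\<in>A \<union> \<gamma> ` {1..K}. L2 x = 0"
  then show "\<forall>x\<in>A \<union> \<gamma> ` {1..K}. L1 x + L2 x = 0" by simp
qed

lemma G_msc: "L1 \<in> G \<Longrightarrow> (\<lambda>x. msc c (L1 x)) \<in> G"
  unfolding G_iff
proof (elim conjE, intro conjI)
  assume "merom_off atlas (A \<union> \<gamma> ` {1..K}) L1"
  then show "merom_off atlas (A \<union> \<gamma> ` {1..K}) (\<lambda>x. msc c (L1 x))"
    by (rule merom_msc[OF charts finE])
  assume "\<forall>s\<in>{1..K}. tyurin_cond kind (wU s) (w s) (\<alpha> s) L1"
  then show "\<forall>s\<in>{1..K}. tyurin_cond kind (wU s) (w s) (\<alpha> s) (\<lambda>x. msc c (L1 x))"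
    using tc_msc by blast
  assume "\<forall>x. x \<notin> A \<union> \<gamma> ` {1..K} \<longrightarrow> L1 x \<in> lie_alg kind"
  then show "\<forall>x. x \<notin> A \<union> \<gamma> ` {1..K} \<longrightarrow> msc c (L1 x) \<in> lie_alg kind"
    using lie_msc by blast
  assume "\<forall>x\<in>A \<union> \<gamma> ` {1..K}. L1 x = 0"
  then show "\<forall>x\<in>A \<union> \<gamma> ` {1..K}. msc c (L1 x) = 0" by simp
qed

lemma G_lie: "L \<in> G \<Longrightarrow> L x \<in> lie_alg kind"
  unfolding G_iff using lie_zero by (cases "x \<in> A \<union> \<gamma> ` {1..K}") auto

lemma V_iff: "L \<in> V m \<longleftrightarrow> L \<in> G \<and> (\<forall>p\<in>{1..N}. ord_ge (zU p) (z p) L m)"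
  unfolding V_def filt_def by (rule mem_Collect_eq)

lemma V_zero: "(\<lambda>x. 0) \<in> V m"
  unfolding V_iff using G_zero ord_ge_zero zball by blast

lemma V_add: "L1 \<in> V m \<Longrightarrow> L2 \<in> V m \<Longrightarrow> (\<lambda>x. L1 x + L2 x) \<in> V m"
  unfolding V_iff using G_add ord_ge_add by blast

lemma V_msc: "L1 \<in> V m \<Longrightarrow> (\<lambda>x. msc c (L1 x)) \<in> V m"
  unfolding V_iff using G_msc ord_ge_msc by blast

lemma V_comb: "finite F \<Longrightarrow> \<forall>i\<in>F. f i \<in> V m \<Longrightarrow> (\<lambda>x. \<Sum>i\<in>F. msc (c i) (f i x)) \<in> V m"
  by (rule comb_closed[OF V_zero V_add V_msc])

lemma V_diff: "L1 \<in> V m \<Longrightarrow> L2 \<in> V m \<Longrightarrow> (\<lambda>x. L1 x - L2 x) \<in> V m"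
proof -
  assume a: "L1 \<in> V m" "L2 \<in> V m"
  have "(\<lambda>x. L1 x + msc (-1) (L2 x)) \<in> V m" by (intro V_add V_msc a)
  moreover have "(\<lambda>x. L1 x + msc (-1) (L2 x)) = (\<lambda>x. L1 x - L2 x)"
    by (auto simp: vec_eq_iff)
  ultimately show ?thesis by simp
qed

lemma V_mono: "m \<le> m' \<Longrightarrow> L \<in> V m' \<Longrightarrow> L \<in> V m"
  unfolding V_iff using ord_ge_mono by blast

definition lead :: "int \<Rightarrow> nat \<Rightarrow> ('a \<Rightarrow> 'n cmat) \<Rightarrow> 'n cmat" where
  "lead m p L = (SOME Y. ord_ge (zU p) (z p) (\<lambda>x. L x - msc (z p x powi m) Y) (m + 1))"

lemma lead_spec:
  assumes "L \<in> V m" "p \<in> {1..N}"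
  shows "ord_ge (zU p) (z p) (\<lambda>x. L x - msc (z p x powi m) (lead m p L)) (m + 1)"
proof -
  have "ord_ge (zU p) (z p) L m" using assms unfolding V_iff by blast
  from ord_lead[OF this] show ?thesis unfolding lead_def by (rule someI_ex)
qed

lemma lead_eq:
  assumes "L \<in> V m" "p \<in> {1..N}" "ord_ge (zU p) (z p) (\<lambda>x. L x - msc (z p x powi m) Y) (m + 1)"
  shows "lead m p L = Y"
  by (rule ord_lead_unique[OF lead_spec[OF assms(1,2)] assms(3)])

definition Lam :: "int \<Rightarrow> ('a \<Rightarrow> 'n cmat) \<Rightarrow> nat \<Rightarrow> 'n cmat" where
  "Lam m L = (\<lambda>p. if p \<in> {1..N} then lead m p L else 0)"

lemma Lam_W:
  assumes "L \<in> V m"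
  shows "L \<in> V (m + 1) \<longleftrightarrow> Lam m L = 0"
proof
  assume W: "L \<in> V (m + 1)"
  have "lead m p L = 0" if "p \<in> {1..N}" for p
  proof (rule lead_eq[OF assms that])
    have "ord_ge (zU p) (z p) L (m + 1)" using W that unfolding V_iff by blast
    then show "ord_ge (zU p) (z p) (\<lambda>x. L x - msc (z p x powi m) 0) (m + 1)" by simp
  qed
  then show "Lam m L = 0" by (auto simp: Lam_def)
next
  assume "Lam m L = 0"
  then have "lead m p L = 0" if "p \<in> {1..N}" for p
    using that by (metis Lam_def zero_fun_apply)
  then have "ord_ge (zU p) (z p) L (m + 1)" if "p \<in> {1..N}" for p
    using lead_spec[OF assms that] that by simp
  then show "L \<in> V (m + 1)" using assms unfolding V_iff by blast
qed

lemma lead_lie: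
  assumes "L \<in> V m" "p \<in> {1..N}"
  shows "lead m p L \<in> lie_alg kind"
proof -
  have lim: "((\<lambda>\<zeta>. msc (\<zeta> powi (-m)) (in_chart (zU p) (z p) L \<zeta>)) \<longlongrightarrow> lead m p L) (at 0)"
    by (rule ord_limit[OF lead_spec[OF assms]])
  have LG: "L \<in> G" using assms unfolding V_iff by blast
  have "\<forall>\<^sub>F \<zeta> in at 0. msc (\<zeta> powi (-m)) (in_chart (zU p) (z p) L \<zeta>) \<in> lie_alg kind"
    by (rule always_eventually) (simp add: in_chart_def G_lie[OF LG] lie_msc)
  then show ?thesis using Lim_in_closed_set[OF lie_closed _ at_neq_bot lim] by blast
qed

lemma sum_fsc_apply: "(\<Sum>i\<in>F. fsc (c i) (f i)) p = (\<Sum>i\<in>F. msc (c i) (f i p))"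
  by (simp add: sum_fun_apply fsc_def)

lemma ord_comb:
  assumes "\<exists>r>0. ball 0 r \<subseteq> \<phi> ` U" "finite F" "\<forall>i\<in>F. ord_ge U \<phi> (f i) k"
  shows "ord_ge U \<phi> (\<lambda>x. \<Sum>i\<in>F. msc (c i) (f i x)) k"
proof -
  have "(\<lambda>x. \<Sum>i\<in>F. msc (c i) (f i x)) \<in> {L. ord_ge U \<phi> L k}"
  proof (rule comb_closed)
    show "(\<lambda>x. 0) \<in> {L. ord_ge U \<phi> L k}" using ord_ge_zero[OF assms(1)] by simp
  qed (use assms ord_ge_add ord_ge_msc in auto)
  then show ?thesis by simp
qed

lemma Lam_comb:
  assumes "finite F" "\<forall>i\<in>F. f i \<in> V m"
  shows "Lam m (\<lambda>x. \<Sum>i\<in>F. msc (c i) (f i x)) = (\<Sum>i\<in>F. fsc (c i) (Lam m (f i)))"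
proof
  fix p
  show "Lam m (\<lambda>x. \<Sum>i\<in>F. msc (c i) (f i x)) p = (\<Sum>i\<in>F. fsc (c i) (Lam m (f i))) p"
  proof (cases "p \<in> {1..N}")
    case True
    let ?Y = "\<Sum>i\<in>F. msc (c i) (lead m p (f i))"
    have eq: "(\<lambda>x. (\<Sum>i\<in>F. msc (c i) (f i x)) - msc (z p x powi m) ?Y) =
      (\<lambda>x. \<Sum>i\<in>F. msc (c i) (f i x - msc (z p x powi m) (lead m p (f i))))"
      apply (rule ext)
      apply (simp only: msc_sum msc_diff sum_subtractf msc_msc)
      apply (simp add: mult.commute)
      done
    have "ord_ge (zU p) (z p) (\<lambda>x. \<Sum>i\<in>F. msc (c i) (f i x - msc (z p x powi m) (lead m p (f i)))) (m + 1)"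
    proof (rule ord_comb[OF _ assms(1)])
      show "\<exists>r>0. ball 0 r \<subseteq> z p ` zU p" using zball True by blast
      show "\<forall>i\<in>F. ord_ge (zU p) (z p) (\<lambda>x. f i x - msc (z p x powi m) (lead m p (f i))) (m + 1)"
        using lead_spec assms(2) True by blast
    qed
    then have o2: "ord_ge (zU p) (z p) (\<lambda>x. (\<Sum>i\<in>F. msc (c i) (f i x)) - msc (z p x powi m) ?Y) (m + 1)"
      unfolding eq .
    have "lead m p (\<lambda>x. \<Sum>i\<in>F. msc (c i) (f i x)) = ?Y"
      by (rule lead_eq[OF V_comb[OF assms] True o2])
    then show ?thesis using True by (simp add: Lam_def sum_fsc_apply)
  next
    case False
    have L0: "Lam m g p = 0" for g using False by (simp add: Lam_def del: atLeastAtMost_iff)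
    show ?thesis by (simp add: L0 sum_fsc_apply)
  qed
qed

lemma Lam_diff:
  assumes "L1 \<in> V m" "L2 \<in> V m"
  shows "Lam m (\<lambda>x. L1 x - L2 x) = Lam m L1 - Lam m L2"
proof
  fix p
  show "Lam m (\<lambda>x. L1 x - L2 x) p = (Lam m L1 - Lam m L2) p"
  proof (cases "p \<in> {1..N}")
    case True
    have eq: "(\<lambda>x. (L1 x - L2 x) - msc (z p x powi m) (lead m p L1 - lead m p L2)) =
      (\<lambda>x. (L1 x - msc (z p x powi m) (lead m p L1)) - (L2 x - msc (z p x powi m) (lead m p L2)))"
      by (rule ext) (simp add: msc_diff algebra_simps)
    have o2: "ord_ge (zU p) (z p) (\<lambda>x. (L1 x - L2 x) - msc (z p x powi m) (lead m p L1 - lead m p L2)) (m + 1)"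
      unfolding eq by (rule ord_ge_diff[OF lead_spec[OF assms(1) True] lead_spec[OF assms(2) True]])
    have "lead m p (\<lambda>x. L1 x - L2 x) = lead m p L1 - lead m p L2"
      by (rule lead_eq[OF V_diff[OF assms] True o2])
    then show ?thesis using True by (simp add: Lam_def)
  next
    case False
    have L0: "Lam m g p = 0" for g using False by (simp add: Lam_def del: atLeastAtMost_iff)
    show ?thesis by (simp add: L0)
  qed
qed

lemma W_sub_V: "L \<in> V (m + 1) \<Longrightarrow> L \<in> V m"
  by (rule V_mono[of m "m+1"]) auto

end

lemma fsc_one[simp]: "fsc 1 f = f" by (simp add: fsc_def)
lemma fsc_zero[simp]: "fsc c 0 = 0" by (simp add: fsc_def fun_eq_iff)
lemma fsc_minus_one: "fsc (-1) f = - f" by (simp add: fsc_def fun_eq_iff vec_eq_iff)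

interpretation fv: vector_space "fsc :: complex \<Rightarrow> (nat \<Rightarrow> 'n::finite cmat) \<Rightarrow> _"
  by unfold_locales (auto simp: fsc_def fun_eq_iff msc_add msc_add_left)

lemma inj_of_explicit:
  assumes H: "\<And>F c. finite F \<Longrightarrow> F \<subseteq> I \<Longrightarrow> (\<Sum>i\<in>F. fsc (c i) (g i)) = 0 \<Longrightarrow> \<forall>i\<in>F. c i = 0"
  shows "inj_on (g :: _ \<Rightarrow> nat \<Rightarrow> 'n::finite cmat) I"
proof (rule inj_onI, rule ccontr)
  fix i j assume ij: "i \<in> I" "j \<in> I" "g i = g j" "i \<noteq> j"
  define c where "c = (\<lambda>k. if k = i then (1::complex) else -1)"
  have "(\<Sum>k\<in>{i, j}. fsc (c k) (g k)) = g i - g j"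
    using ij(4) by (simp add: c_def fsc_minus_one)
  also have "\<dots> = 0" using ij(3) by simp
  finally have z: "(\<Sum>k\<in>{i, j}. fsc (c k) (g k)) = 0" .
  have "finite {i, j}" "{i, j} \<subseteq> I" using ij by auto
  from H[OF this z] have "\<forall>k\<in>{i,j}. c k = 0" .
  then show False by (simp add: c_def)
qed

lemma indep_of_explicit:
  assumes inj: "inj_on g I"
    and H: "\<And>F c. finite F \<Longrightarrow> F \<subseteq> I \<Longrightarrow> (\<Sum>i\<in>F. fsc (c i) (g i)) = 0 \<Longrightarrow> \<forall>i\<in>F. c i = 0"
  shows "fv.independent ((g :: _ \<Rightarrow> nat \<Rightarrow> 'n::finite cmat) ` I)"
  unfolding fv.dependent_explicit
proof clarify
  fix t u v assume t: "finite t" "t \<subseteq> g ` I" "(\<Sum>v\<in>t. fsc (u v) v) = 0" "v \<in> t" "u v \<noteq> 0"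
  obtain F where F: "F \<subseteq> I" "finite F" "t = g ` F" using finite_subset_image[OF t(1,2)] by blast
  have injF: "inj_on g F" using inj F(1) inj_on_subset by blast
  have "(\<Sum>i\<in>F. fsc (u (g i)) (g i)) = 0"
    using t(3) F(3) sum.reindex[OF injF, of "\<lambda>v. fsc (u v) v"] by simp
  then have "\<forall>i\<in>F. u (g i) = 0" using H[OF F(2,1), of "\<lambda>i. u (g i)"] by blast
  then show False using t(4,5) F(3) by auto
qed

context LS
begin

lemma norm_V:
  assumes YG: "Y \<in> G" and s: "s \<in> {1..N}"
    and Hn: "\<forall>p\<in>{1..N}. ord_ge (zU p) (z p)
              (\<lambda>x. Y x - (if p = s then msc ((z p x) powi m) B else 0)) (m + 1)"
  shows "Y \<in> V m \<and> Lam m Y = (\<lambda>p. if p = s then B else 0)"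
proof -
  have o: "ord_ge (zU p) (z p) Y m" if p: "p \<in> {1..N}" for p
  proof -
    have hb: "\<exists>r>0. ball 0 r \<subseteq> z p ` zU p" using zball p by blast
    have D: "ord_ge (zU p) (z p) (\<lambda>x. if p = s then msc ((z p x) powi m) B else 0) m"
      using ord_ge_Z[OF hb] ord_ge_zero[OF hb] by (cases "p = s") auto
    have o1: "ord_ge (zU p) (z p) (\<lambda>x. Y x - (if p = s then msc ((z p x) powi m) B else 0)) (m + 1)"
      using Hn p by blast
    have "ord_ge (zU p) (z p) (\<lambda>x. (Y x - (if p = s then msc ((z p x) powi m) B else 0)) +
       (if p = s then msc ((z p x) powi m) B else 0)) m"
      by (rule ord_ge_add[OF ord_ge_mono[OF o1] D]) simp
    then show ?thesis by simp
  qed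
  have YV: "Y \<in> V m" using YG o unfolding V_iff by blast
  have lp: "lead m p Y = (if p = s then B else 0)" if p: "p \<in> {1..N}" for p
  proof (rule lead_eq[OF YV p])
    have o1: "ord_ge (zU p) (z p) (\<lambda>x. Y x - (if p = s then msc ((z p x) powi m) B else 0)) (m + 1)"
      using Hn p by blast
    moreover have "(\<lambda>x. Y x - (if p = s then msc ((z p x) powi m) B else 0)) =
       (\<lambda>x. Y x - msc (z p x powi m) (if p = s then B else 0))"
      by (cases "p = s") auto
    ultimately show "ord_ge (zU p) (z p) (\<lambda>x. Y x - msc (z p x powi m) (if p = s then B else 0)) (m + 1)"
      by simp
  qed
  have "Lam m Y = (\<lambda>p. if p = s then B else 0)"
  proof
    fix p show "Lam m Y p = (if p = s then B else 0)"
    proof (cases "p \<in> {1..N}")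
      case True then show ?thesis using lp by (simp add: Lam_def)
    next
      case False
      then have "p \<noteq> s" using s by auto
      then show ?thesis using False by (simp add: Lam_def del: atLeastAtMost_iff)
    qed
  qed
  with YV show ?thesis by blast
qed

end

locale LX = LS atlas kind A K \<gamma> wU w \<alpha> N zU z
  for atlas :: "('a::t2_space set \<times> ('a \<Rightarrow> complex)) set"
    and kind :: "'n::finite liekind"
    and A :: "'a set" and K :: nat and \<gamma> :: "nat \<Rightarrow> 'a"
    and wU :: "nat \<Rightarrow> 'a set" and w :: "nat \<Rightarrow> 'a \<Rightarrow> complex" and \<alpha> :: "nat \<Rightarrow> complex^'n"
    and N :: nat and zU :: "nat \<Rightarrow> 'a set" and z :: "nat \<Rightarrow> 'a \<Rightarrow> complex" +
  fixes d :: nat and Xb :: "nat \<Rightarrow> 'n cmat"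
  assumes basis_indep: "\<forall>c. (\<Sum>u\<in>{1..d}. msc (c u) (Xb u)) = 0 \<longrightarrow> (\<forall>u\<in>{1..d}. c u = 0)"
    and basis_span: "\<forall>Y\<in>lie_alg kind. \<exists>c. Y = (\<Sum>u\<in>{1..d}. msc (c u) (Xb u))"
begin

definition eps :: "nat \<times> nat \<Rightarrow> nat \<Rightarrow> 'n cmat" where
  "eps i = (\<lambda>p. if p = snd i then Xb (fst i) else 0)"

abbreviation "T \<equiv> {1..d} \<times> {1..N}"

lemma eps_indep:
  assumes F: "finite F" "F \<subseteq> T" and z0: "(\<Sum>i\<in>F. fsc (c i) (eps i)) = 0"
  shows "\<forall>i\<in>F. c i = 0"
proof
  fix i0 assume i0: "i0 \<in> F"
  obtain u0 s0 where us: "i0 = (u0, s0)" by (cases i0)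
  have u0: "u0 \<in> {1..d}" using F(2) i0 us by auto
  define cc where "cc u = (if (u, s0) \<in> F then c (u, s0) else 0)" for u
  have "(\<Sum>i\<in>F. fsc (c i) (eps i)) s0 = 0" using z0 by simp
  then have z1: "(\<Sum>i\<in>F. msc (c i) (eps i s0)) = 0" by (simp add: sum_fsc_apply)
  have "(\<Sum>i\<in>F. msc (c i) (eps i s0)) = (\<Sum>i\<in>F. if snd i = s0 then msc (c i) (Xb (fst i)) else 0)"
    by (rule sum.cong) (auto simp: eps_def)
  also have "\<dots> = (\<Sum>i\<in>{i\<in>F. snd i = s0}. msc (c i) (Xb (fst i)))"
    by (rule sum.inter_filter[symmetric]) (rule F(1))
  also have "{i\<in>F. snd i = s0} = (\<lambda>u. (u, s0)) ` {u\<in>{1..d}. (u, s0) \<in> F}"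
    using F(2) by force
  also have "(\<Sum>i\<in>(\<lambda>u. (u, s0)) ` {u\<in>{1..d}. (u, s0) \<in> F}. msc (c i) (Xb (fst i))) =
      (\<Sum>u\<in>{u\<in>{1..d}. (u, s0) \<in> F}. msc (c (u, s0)) (Xb u))"
    by (subst sum.reindex) (auto simp: inj_on_def)
  also have "\<dots> = (\<Sum>u\<in>{1..d}. if (u, s0) \<in> F then msc (c (u, s0)) (Xb u) else 0)"
    by (rule sum.inter_filter) simp
  also have "\<dots> = (\<Sum>u\<in>{1..d}. msc (cc u) (Xb u))"
    by (rule sum.cong) (auto simp: cc_def)
  finally have "(\<Sum>u\<in>{1..d}. msc (cc u) (Xb u)) = 0" using z1 by simp
  then have "cc u0 = 0" using basis_indep u0 by blast
  then show "c i0 = 0" using i0 us by (simp add: cc_def)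
qed

lemma eps_inj: "inj_on eps T"
  by (rule inj_of_explicit) (use eps_indep in blast)

lemma eps_independent: "fv.independent (eps ` T)"
  by (rule indep_of_explicit[OF eps_inj]) (use eps_indep in blast)

lemma Lam_span:
  assumes "L \<in> V m"
  shows "\<exists>C. Lam m L = (\<Sum>i\<in>T. fsc (C i) (eps i))"
proof -
  have "\<forall>p\<in>{1..N}. \<exists>c. lead m p L = (\<Sum>u\<in>{1..d}. msc (c u) (Xb u))"
    using lead_lie[OF assms] basis_span by blast
  then obtain cc where cc: "\<And>p. p \<in> {1..N} \<Longrightarrow> lead m p L = (\<Sum>u\<in>{1..d}. msc (cc p u) (Xb u))"
    by metis
  define C where "C i = cc (snd i) (fst i)" for i
  have "Lam m L p = (\<Sum>i\<in>T. fsc (C i) (eps i)) p" for p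
  proof -
    have "(\<Sum>i\<in>T. fsc (C i) (eps i)) p = (\<Sum>i\<in>T. msc (C i) (eps i p))"
      by (simp add: sum_fsc_apply)
    also have "\<dots> = (\<Sum>u\<in>{1..d}. \<Sum>s\<in>{1..N}. msc (cc s u) (if p = s then Xb u else 0))"
      by (simp add: sum.cartesian_product C_def eps_def case_prod_beta)
    also have "\<dots> = (\<Sum>u\<in>{1..d}. if p \<in> {1..N} then msc (cc p u) (Xb u) else 0)"
    proof (rule sum.cong[OF refl])
      fix u
      have "(\<Sum>s\<in>{1..N}. msc (cc s u) (if p = s then Xb u else 0)) =
        (\<Sum>s\<in>{1..N}. if p = s then msc (cc p u) (Xb u) else 0)"
        by (rule sum.cong) auto
      also have "\<dots> = (if p \<in> {1..N} then msc (cc p u) (Xb u) else 0)"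
        by (rule sum.delta') simp
      finally show "(\<Sum>s\<in>{1..N}. msc (cc s u) (if p = s then Xb u else 0)) =
        (if p \<in> {1..N} then msc (cc p u) (Xb u) else 0)" .
    qed
    also have "\<dots> = Lam m L p"
    proof (cases "p \<in> {1..N}")
      case True then show ?thesis using cc[OF True] by (simp add: Lam_def)
    next
      case False then show ?thesis by (simp add: Lam_def del: atLeastAtMost_iff)
    qed
    finally show ?thesis by simp
  qed
  then show ?thesis by blast
qed

lemma comb_span: "(\<Sum>i\<in>I. fsc (C i) (g i)) \<in> fv.span (g ` I)"
  by (rule fv.span_sum) (intro ballI fv.span_scale fv.span_base imageI)

lemma Lam_span': "L \<in> V m \<Longrightarrow> Lam m L \<in> fv.span (eps ` T)"
  using Lam_span[of L m] comb_span by metis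

lemma Lam_fam:
  assumes XV: "\<forall>u\<in>{1..d}. \<forall>s\<in>{1..N}. X u m s \<in> V m \<and> Lam m (X u m s) = eps (u, s)"
    and F: "finite F" "F \<subseteq> T"
  shows "(\<lambda>x. \<Sum>i\<in>F. msc (c i) ((\<lambda>(u,s). X u m s) i x)) \<in> V m \<and>
    Lam m (\<lambda>x. \<Sum>i\<in>F. msc (c i) ((\<lambda>(u,s). X u m s) i x)) = (\<Sum>i\<in>F. fsc (c i) (eps i))"
proof -
  have fV: "\<forall>i\<in>F. (\<lambda>(u,s). X u m s) i \<in> V m" using XV F(2) by auto
  have "Lam m (\<lambda>x. \<Sum>i\<in>F. msc (c i) ((\<lambda>(u,s). X u m s) i x)) =
      (\<Sum>i\<in>F. fsc (c i) (Lam m ((\<lambda>(u,s). X u m s) i)))"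
    by (rule Lam_comb[OF F(1) fV])
  also have "\<dots> = (\<Sum>i\<in>F. fsc (c i) (eps i))"
    by (rule sum.cong[OF refl]) (use XV F(2) in auto)
  finally show ?thesis using V_comb[OF F(1) fV] by blast
qed

lemma part_b:
  assumes XV: "\<forall>u\<in>{1..d}. \<forall>s\<in>{1..N}. X u m s \<in> V m \<and> Lam m (X u m s) = eps (u, s)"
  shows "quot_basis_fam (V m) (V (m + 1)) T (\<lambda>(u,s). X u m s)"
  unfolding quot_basis_fam_def
proof (intro conjI allI impI ballI)
  fix i assume "i \<in> T"
  then show "(\<lambda>(u,s). X u m s) i \<in> V m" using XV by auto
next
  fix F c i assume F: "finite F" "F \<subseteq> T"
    and W: "(\<lambda>x. \<Sum>i\<in>F. msc (c i) ((\<lambda>(u,s). X u m s) i x)) \<in> V (m + 1)" and i: "i \<in> F"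
  have L: "(\<lambda>x. \<Sum>i\<in>F. msc (c i) ((\<lambda>(u,s). X u m s) i x)) \<in> V m \<and>
    Lam m (\<lambda>x. \<Sum>i\<in>F. msc (c i) ((\<lambda>(u,s). X u m s) i x)) = (\<Sum>i\<in>F. fsc (c i) (eps i))"
    by (rule Lam_fam[where X=X and m=m, OF XV F])
  have "Lam m (\<lambda>x. \<Sum>i\<in>F. msc (c i) ((\<lambda>(u,s). X u m s) i x)) = 0"
    using Lam_W[OF conjunct1[OF L]] W by blast
  then have "(\<Sum>i\<in>F. fsc (c i) (eps i)) = 0" unfolding conjunct2[OF L] .
  then show "c i = 0" using eps_indep[OF F] i by blast
next
  fix L assume LV: "L \<in> V m"
  obtain C where C: "Lam m L = (\<Sum>i\<in>T. fsc (C i) (eps i))" using Lam_span[OF LV] by blast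
  have fin: "finite T" by simp
  have L: "(\<lambda>x. \<Sum>i\<in>T. msc (C i) ((\<lambda>(u,s). X u m s) i x)) \<in> V m \<and>
    Lam m (\<lambda>x. \<Sum>i\<in>T. msc (C i) ((\<lambda>(u,s). X u m s) i x)) = (\<Sum>i\<in>T. fsc (C i) (eps i))"
    by (rule Lam_fam[where X=X and m=m, OF XV fin subset_refl])
  have D: "(\<lambda>x. L x - (\<Sum>i\<in>T. msc (C i) ((\<lambda>(u,s). X u m s) i x))) \<in> V m"
    by (rule V_diff[OF LV conjunct1[OF L]])
  have "Lam m (\<lambda>x. L x - (\<Sum>i\<in>T. msc (C i) ((\<lambda>(u,s). X u m s) i x))) = 0"
    unfolding Lam_diff[OF LV conjunct1[OF L]] conjunct2[OF L] C by simp
  then have "(\<lambda>x. L x - (\<Sum>i\<in>T. msc (C i) ((\<lambda>(u,s). X u m s) i x))) \<in> V (m + 1)"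
    using Lam_W[OF D] by blast
  then show "\<exists>F c. finite F \<and> F \<subseteq> T \<and> (\<lambda>x. L x - (\<Sum>i\<in>F. msc (c i) ((\<lambda>(u,s). X u m s) i x))) \<in> V (m + 1)"
    using fin by blast
qed

lemma part_c:
  assumes XV: "\<forall>u\<in>{1..d}. \<forall>s\<in>{1..N}. X u m s \<in> V m \<and> Lam m (X u m s) = eps (u, s)"
    and Q: "quot_basis_fam (V m) (V (m + 1)) B id"
  shows "finite B \<and> card B = N * d"
proof -
  have Q1: "\<forall>b\<in>B. b \<in> V m"
    and Q2: "\<And>F c. finite F \<Longrightarrow> F \<subseteq> B \<Longrightarrow> (\<lambda>x. \<Sum>i\<in>F. msc (c i) (id i x)) \<in> V (m + 1) \<Longrightarrow> (\<forall>i\<in>F. c i = 0)"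
    and Q3: "\<forall>L\<in>V m. \<exists>F c. finite F \<and> F \<subseteq> B \<and> (\<lambda>x. L x - (\<Sum>i\<in>F. msc (c i) (id i x))) \<in> V (m + 1)"
    using Q unfolding quot_basis_fam_def by auto
  have comb: "(\<lambda>x. \<Sum>i\<in>F. msc (c i) (id i x)) \<in> V m \<and>
      Lam m (\<lambda>x. \<Sum>i\<in>F. msc (c i) (id i x)) = (\<Sum>i\<in>F. fsc (c i) (Lam m i))"
    if F: "finite F" "F \<subseteq> B" for F c
  proof -
    have fV: "\<forall>i\<in>F. id i \<in> V m" using Q1 F(2) by auto
    have "Lam m (\<lambda>x. \<Sum>i\<in>F. msc (c i) (id i x)) = (\<Sum>i\<in>F. fsc (c i) (Lam m (id i)))"
      by (rule Lam_comb[OF F(1) fV])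
    then show ?thesis using V_comb[OF F(1) fV] by simp
  qed
  have HB: "\<forall>i\<in>F. c i = 0"
    if F: "finite F" "F \<subseteq> B" and z: "(\<Sum>i\<in>F. fsc (c i) (Lam m i)) = 0" for F c
  proof -
    have "Lam m (\<lambda>x. \<Sum>i\<in>F. msc (c i) (id i x)) = 0" using comb[OF F, of c] z by simp
    then have "(\<lambda>x. \<Sum>i\<in>F. msc (c i) (id i x)) \<in> V (m + 1)"
      using Lam_W comb[OF F, of c] by blast
    then show ?thesis by (rule Q2[OF F])
  qed
  have injB: "inj_on (Lam m) B"
    by (rule inj_of_explicit) (use HB in blast)
  have indB: "fv.independent (Lam m ` B)"
    by (rule indep_of_explicit[OF injB]) (use HB in blast)
  have spanB: "Lam m ` B \<subseteq> fv.span (eps ` T)"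
    using Lam_span' Q1 by blast
  have spanE: "eps ` T \<subseteq> fv.span (Lam m ` B)"
  proof
    fix v assume "v \<in> eps ` T"
    then obtain u s where us: "u \<in> {1..d}" "s \<in> {1..N}" "v = eps (u, s)" by auto
    have eV: "X u m s \<in> V m" and eL: "Lam m (X u m s) = eps (u, s)" using XV us by auto
    obtain F c where F: "finite F" "F \<subseteq> B"
      and W: "(\<lambda>x. X u m s x - (\<Sum>i\<in>F. msc (c i) (id i x))) \<in> V (m + 1)"
      using Q3 eV by blast
    have cV: "(\<lambda>x. \<Sum>i\<in>F. msc (c i) (id i x)) \<in> V m" using comb[OF F] by blast
    have "Lam m (\<lambda>x. X u m s x - (\<Sum>i\<in>F. msc (c i) (id i x))) = 0"
      using Lam_W[OF V_diff[OF eV cV]] W by blast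
    then have "Lam m (X u m s) - Lam m (\<lambda>x. \<Sum>i\<in>F. msc (c i) (id i x)) = 0"
      unfolding Lam_diff[OF eV cV] .
    then have "v = (\<Sum>i\<in>F. fsc (c i) (Lam m i))"
      using comb[OF F, of c] eL us(3) by simp
    also have "\<dots> \<in> fv.span (Lam m ` F)" by (rule comb_span)
    also have "\<dots> \<subseteq> fv.span (Lam m ` B)" by (rule fv.span_mono) (use F in auto)
    finally show "v \<in> fv.span (Lam m ` B)" .
  qed
  have finE: "finite (eps ` T)" by simp
  have b1: "finite (Lam m ` B) \<and> card (Lam m ` B) \<le> card (eps ` T)"
    by (rule fv.independent_span_bound[OF finE indB spanB])
  have b2: "card (eps ` T) \<le> card (Lam m ` B)"
    using fv.independent_span_bound[OF conjunct1[OF b1] eps_independent spanE] by blast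
  have cT: "card (eps ` T) = N * d"
    using card_image[OF eps_inj] by (simp add: card_cartesian_product)
  have "finite B" using b1 injB finite_image_iff by blast
  moreover have "card B = N * d" using b1 b2 cT card_image[OF injB] by simp
  ultimately show ?thesis by blast
qed

lemma XV_lemma:
  assumes YG: "\<forall>u\<in>{1..d}. \<forall>s\<in>{1..N}. \<forall>m. Y u m s \<in> G"
    and Yn: "\<forall>u\<in>{1..d}. \<forall>s\<in>{1..N}. \<forall>m. \<forall>p\<in>{1..N}.
        ord_ge (zU p) (z p) (\<lambda>x. Y u m s x - (if p = s then msc ((z p x) powi m) (Xb u) else 0)) (m + 1)"
  shows "\<forall>u\<in>{1..d}. \<forall>s\<in>{1..N}. Y u m s \<in> V m \<and> Lam m (Y u m s) = eps (u, s)"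
proof (intro ballI)
  fix u s assume u: "u \<in> {1..d}" and s: "s \<in> {1..N}"
  have "Y u m s \<in> V m \<and> Lam m (Y u m s) = (\<lambda>p. if p = s then Xb u else 0)"
    by (rule norm_V) (use YG Yn u s in auto)
  moreover have "eps (u, s) = (\<lambda>p. if p = s then Xb u else 0)"
    unfolding eps_def fst_conv snd_conv ..
  ultimately show "Y u m s \<in> V m \<and> Lam m (Y u m s) = eps (u, s)" by simp
qed

lemma part_d:
  assumes XV: "\<forall>u\<in>{1..d}. \<forall>s\<in>{1..N}. X u m s \<in> V m \<and> Lam m (X u m s) = eps (u, s)"
    and XV': "\<forall>u\<in>{1..d}. \<forall>s\<in>{1..N}. X' u m s \<in> V m \<and> Lam m (X' u m s) = eps (u, s)"
    and u: "u \<in> {1..d}" and s: "s \<in> {1..N}"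
  shows "(\<lambda>x. X u m s x - X' u m s x) \<in> V (m + 1)"
proof -
  have a: "X u m s \<in> V m" "X' u m s \<in> V m" using XV XV' u s by auto
  have "Lam m (\<lambda>x. X u m s x - X' u m s x) = 0"
    unfolding Lam_diff[OF a] using XV XV' u s by simp
  then show ?thesis using Lam_W[OF V_diff[OF a]] by blast
qed

lemma part_a:
  assumes XV: "\<forall>m. \<forall>u\<in>{1..d}. \<forall>s\<in>{1..N}. X u m s \<in> V m \<and> Lam m (X u m s) = eps (u, s)"
    and F: "finite F" "F \<subseteq> {1..d} \<times> {1..N} \<times> (UNIV :: int set)"
    and Z: "(\<lambda>x. \<Sum>(u,s,m)\<in>F. msc (c (u,s,m)) (X u m s x)) = (\<lambda>x. 0)"
  shows "\<forall>i\<in>F. c i = 0"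
proof (rule ccontr)
  assume "\<not> (\<forall>i\<in>F. c i = 0)"
  define g where "g i = X (fst i) (snd (snd i)) (fst (snd i))" for i :: "nat \<times> nat \<times> int"
  define mm where "mm i = snd (snd i)" for i :: "nat \<times> nat \<times> int"
  define \<pi> where "\<pi> i = (fst i, fst (snd i))" for i :: "nat \<times> nat \<times> int"
  define F' where "F' = {i\<in>F. c i \<noteq> 0}"
  have F'fin: "finite F'" "F' \<subseteq> F" using F(1) by (auto simp: F'_def)
  have F'ne: "F' \<noteq> {}" using \<open>\<not> (\<forall>i\<in>F. c i = 0)\<close> by (auto simp: F'_def)
  define m0 where "m0 = Min (mm ` F')"
  have m0le: "m0 \<le> mm i" if "i \<in> F'" for i
    unfolding m0_def using F'fin(1) that by simp
  have "m0 \<in> mm ` F'"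
    using Min_in[of "mm ` F'"] F'fin(1) F'ne unfolding m0_def by blast
  then obtain i0 where i0: "i0 \<in> F'" "mm i0 = m0" by (metis imageE)
  have giV: "g i \<in> V (mm i) \<and> Lam (mm i) (g i) = eps (\<pi> i)" if "i \<in> F" for i
    using XV F(2) that by (auto simp: g_def mm_def \<pi>_def)
  have Z1: "(\<lambda>x. \<Sum>i\<in>F. msc (c i) (g i x)) = (\<lambda>x. 0)"
    using Z by (simp add: g_def case_prod_beta)
  have Z2: "(\<lambda>x. \<Sum>i\<in>F'. msc (c i) (g i x)) = (\<lambda>x. 0)"
  proof -
    have "(\<Sum>i\<in>F'. msc (c i) (g i x)) = (\<Sum>i\<in>F. msc (c i) (g i x))" for x
      by (rule sum.mono_neutral_left[OF F(1) F'fin(2)]) (auto simp: F'_def)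
    then show ?thesis using Z1 by metis
  qed
  have gV0: "\<forall>i\<in>F'. g i \<in> V m0"
    using giV m0le F'fin(2) V_mono by blast
  have "Lam m0 (\<lambda>x. \<Sum>i\<in>F'. msc (c i) (g i x)) = (\<Sum>i\<in>F'. fsc (c i) (Lam m0 (g i)))"
    by (rule Lam_comb[OF F'fin(1) gV0])
  moreover have "Lam m0 (\<lambda>x. 0) = 0"
    using Lam_W[OF V_zero] V_zero by blast
  ultimately have S0: "(\<Sum>i\<in>F'. fsc (c i) (Lam m0 (g i))) = 0" using Z2 by simp
  have Lg: "Lam m0 (g i) = (if mm i = m0 then eps (\<pi> i) else 0)" if "i \<in> F'" for i
  proof (cases "mm i = m0")
    case True
    have "i \<in> F" using that F'fin(2) by blast
    then have "Lam (mm i) (g i) = eps (\<pi> i)" using giV by blast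
    then show ?thesis using True by simp
  next
    case False
    then have "m0 + 1 \<le> mm i" using m0le[OF that] by simp
    then have "g i \<in> V (m0 + 1)" using giV that F'fin(2) V_mono by blast
    then show ?thesis using Lam_W gV0 that False by simp
  qed
  define F0 where "F0 = {i\<in>F'. mm i = m0}"
  have F0fin: "finite F0" using F'fin(1) by (simp add: F0_def)
  have "(\<Sum>i\<in>F'. fsc (c i) (Lam m0 (g i))) = (\<Sum>i\<in>F'. if mm i = m0 then fsc (c i) (eps (\<pi> i)) else 0)"
    by (rule sum.cong[OF refl]) (simp add: Lg)
  also have "\<dots> = (\<Sum>i\<in>F0. fsc (c i) (eps (\<pi> i)))"
    unfolding F0_def by (rule sum.inter_filter[symmetric, OF F'fin(1)])
  finally have S1: "(\<Sum>i\<in>F0. fsc (c i) (eps (\<pi> i))) = 0" using S0 by simp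
  have injp: "inj_on \<pi> F0"
  proof (rule inj_onI)
    fix i j assume "i \<in> F0" "j \<in> F0" "\<pi> i = \<pi> j"
    then show "i = j" by (auto simp: F0_def mm_def \<pi>_def prod_eq_iff)
  qed
  define c' where "c' j = c (fst j, snd j, m0)" for j
  have cc: "c' (\<pi> i) = c i" if "i \<in> F0" for i
    using that by (auto simp: F0_def mm_def \<pi>_def c'_def)
  have "(\<Sum>j\<in>\<pi> ` F0. fsc (c' j) (eps j)) = (\<Sum>i\<in>F0. fsc (c' (\<pi> i)) (eps (\<pi> i)))"
    using sum.reindex[OF injp, of "\<lambda>j. fsc (c' j) (eps j)"] by (simp add: comp_def)
  also have "\<dots> = (\<Sum>i\<in>F0. fsc (c i) (eps (\<pi> i)))"
    by (rule sum.cong[OF refl]) (simp add: cc)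
  finally have S2: "(\<Sum>j\<in>\<pi> ` F0. fsc (c' j) (eps j)) = 0" using S1 by simp
  have sub: "\<pi> ` F0 \<subseteq> T" using F(2) F'fin(2) by (auto simp: F0_def \<pi>_def)
  have "\<forall>j\<in>\<pi> ` F0. c' j = 0" by (rule eps_indep[OF finite_imageI[OF F0fin] sub S2])
  moreover have "i0 \<in> F0" using i0 by (simp add: F0_def)
  ultimately have "c' (\<pi> i0) = 0" by blast
  then have "c i0 = 0" using cc[OF \<open>i0 \<in> F0\<close>] by simp
  then show False using i0(1) by (simp add: F'_def)
qed

end

theorem proposition3p10:
  fixes atlas :: "('a::t2_space set \<times> ('a \<Rightarrow> complex)) set"
    and kind :: "'n::finite liekind"
    and N M K d :: nat
    and P Q \<gamma> :: "nat \<Rightarrow> 'a"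
    and zU wU :: "nat \<Rightarrow> 'a set" and z w :: "nat \<Rightarrow> 'a \<Rightarrow> complex"
    and \<alpha> :: "nat \<Rightarrow> complex^'n"
    and Xb :: "nat \<Rightarrow> 'n cmat"
    and X :: "nat \<Rightarrow> int \<Rightarrow> nat \<Rightarrow> 'a \<Rightarrow> 'n cmat"
  defines "A \<equiv> P ` {1..N} \<union> Q ` {1..M}"
  defines "G \<equiv> lax_alg atlas kind A K \<gamma> wU w \<alpha>"
  assumes RS: "compact_riemann_surface atlas"
    and N_pos: "N \<ge> 1" and M_pos: "M \<ge> 1"
    and P_inj: "inj_on P {1..N}" and Q_inj: "inj_on Q {1..M}"
    and PQ_disj: "P ` {1..N} \<inter> Q ` {1..M} = {}"
    and \<gamma>_inj: "inj_on \<gamma> {1..K}" and \<gamma>_A: "\<gamma> ` {1..K} \<inter> A = {}"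
    and z_coord: "\<forall>p\<in>{1..N}. local_coord atlas (zU p) (z p) (P p)"
    and w_coord: "\<forall>s\<in>{1..K}. local_coord atlas (wU s) (w s) (\<gamma> s)"
    and SO_iso: "kind = SO \<longrightarrow> (\<forall>s\<in>{1..K}. bil (\<alpha> s) (\<alpha> s) = 0)"
    and SP_form: "\<forall>\<sigma>. kind = SP \<sigma> \<longrightarrow> transpose \<sigma> = - \<sigma> \<and> invertible \<sigma>"
    and basis_in: "\<forall>u\<in>{1..d}. Xb u \<in> lie_alg kind"
    and basis_indep: "\<forall>c. (\<Sum>u\<in>{1..d}. msc (c u) (Xb u)) = 0 \<longrightarrow> (\<forall>u\<in>{1..d}. c u = 0)"
    and basis_span: "\<forall>Y\<in>lie_alg kind. \<exists>c. Y = (\<Sum>u\<in>{1..d}. msc (c u) (Xb u))"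
    and X_in: "\<forall>u\<in>{1..d}. \<forall>s\<in>{1..N}. \<forall>m. X u m s \<in> G"
    and X_norm: "\<forall>u\<in>{1..d}. \<forall>s\<in>{1..N}. \<forall>m. \<forall>p\<in>{1..N}.
        ord_ge (zU p) (z p)
          (\<lambda>x. X u m s x - (if p = s then msc ((z p x) powi m) (Xb u) else 0)) (m + 1)"
  shows
    "(\<forall>F c. finite F \<longrightarrow> F \<subseteq> {1..d} \<times> {1..N} \<times> (UNIV :: int set) \<longrightarrow>
        (\<lambda>x. \<Sum>(u,s,m)\<in>F. msc (c (u,s,m)) (X u m s x)) = (\<lambda>x. 0) \<longrightarrow>
        (\<forall>i\<in>F. c i = 0))
   \<and> (\<forall>m. quot_basis_fam (filt G N zU z m) (filt G N zU z (m + 1))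
            ({1..d} \<times> {1..N}) (\<lambda>(u,s). X u m s))
   \<and> (\<forall>m. \<forall>B. quot_basis_fam (filt G N zU z m) (filt G N zU z (m + 1)) B id
            \<longrightarrow> finite B \<and> card B = N * d)
   \<and> (\<forall>X'. (\<forall>u\<in>{1..d}. \<forall>s\<in>{1..N}. \<forall>m. X' u m s \<in> G) \<longrightarrow>
          (\<forall>u\<in>{1..d}. \<forall>s\<in>{1..N}. \<forall>m. \<forall>p\<in>{1..N}.
             ord_ge (zU p) (z p)
               (\<lambda>x. X' u m s x - (if p = s then msc ((z p x) powi m) (Xb u) else 0)) (m + 1)) \<longrightarrow>
          (\<forall>u\<in>{1..d}. \<forall>s\<in>{1..N}. \<forall>m. (\<lambda>x. X u m s x - X' u m s x) \<in> filt G N zU z (m + 1)))"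
proof -
  have finA: "finite A" unfolding A_def by simp
  have wball: "\<forall>s\<in>{1..K}. \<exists>r>0. ball 0 r \<subseteq> w s ` wU s"
    using w_coord local_coord_ball by blast
  have zball: "\<forall>p\<in>{1..N}. \<exists>r>0. ball 0 r \<subseteq> z p ` zU p"
    using z_coord local_coord_ball by blast
  interpret I: LX atlas kind A K \<gamma> wU w \<alpha> N zU z d Xb
  proof (intro LX.intro LS.intro LX_axioms.intro)
  qed (fact RS finA wball zball basis_indep basis_span)+
  have GG: "I.G = G" unfolding I.G_def G_def ..
  have VV: "\<And>m. filt G N zU z m = I.V m" unfolding I.V_def GG ..
  have Xin': "\<forall>u\<in>{1..d}. \<forall>s\<in>{1..N}. \<forall>m. X u m s \<in> I.G" using X_in unfolding GG .
  have XV: "\<And>m. \<forall>u\<in>{1..d}. \<forall>s\<in>{1..N}. X u m s \<in> I.V m \<and> I.Lam m (X u m s) = I.eps (u, s)"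
    by (rule I.XV_lemma[where Y=X, OF Xin' X_norm])
  show ?thesis unfolding VV
  proof (rule conjI[OF _ conjI[OF _ conjI]])
    show "\<forall>F c. finite F \<longrightarrow> F \<subseteq> {1..d} \<times> {1..N} \<times> (UNIV :: int set) \<longrightarrow>
        (\<lambda>x. \<Sum>(u,s,m)\<in>F. msc (c (u,s,m)) (X u m s x)) = (\<lambda>x. 0) \<longrightarrow> (\<forall>i\<in>F. c i = 0)"
    proof (intro allI impI)
      fix F c
      assume "finite F" "F \<subseteq> {1..d} \<times> {1..N} \<times> (UNIV :: int set)"
        "(\<lambda>x. \<Sum>(u,s,m)\<in>F. msc (c (u,s,m)) (X u m s x)) = (\<lambda>x. 0)"
      then show "\<forall>i\<in>F. c i = 0" using I.part_a[where X=X, OF allI[OF XV]] by blast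
    qed
  next
    show "\<forall>m. quot_basis_fam (I.V m) (I.V (m + 1)) ({1..d} \<times> {1..N}) (\<lambda>(u,s). X u m s)"
    proof
      fix m show "quot_basis_fam (I.V m) (I.V (m + 1)) ({1..d} \<times> {1..N}) (\<lambda>(u,s). X u m s)"
        by (rule I.part_b[where X=X and m=m, OF XV[of m]])
    qed
  next
    show "\<forall>m B. quot_basis_fam (I.V m) (I.V (m + 1)) B id \<longrightarrow> finite B \<and> card B = N * d"
    proof (intro allI impI)
      fix m B assume "quot_basis_fam (I.V m) (I.V (m + 1)) B id"
      then show "finite B \<and> card B = N * d" by (rule I.part_c[where X=X and m=m, OF XV[of m]])
    qed
  next
    show "\<forall>X'. (\<forall>u\<in>{1..d}. \<forall>s\<in>{1..N}. \<forall>m. X' u m s \<in> G) \<longrightarrow>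
          (\<forall>u\<in>{1..d}. \<forall>s\<in>{1..N}. \<forall>m. \<forall>p\<in>{1..N}.
             ord_ge (zU p) (z p)
               (\<lambda>x. X' u m s x - (if p = s then msc ((z p x) powi m) (Xb u) else 0)) (m + 1)) \<longrightarrow>
          (\<forall>u\<in>{1..d}. \<forall>s\<in>{1..N}. \<forall>m. (\<lambda>x. X u m s x - X' u m s x) \<in> I.V (m + 1))"
    proof (intro allI impI)
      fix X'
      assume X'in: "\<forall>u\<in>{1..d}. \<forall>s\<in>{1..N}. \<forall>m. X' u m s \<in> G"
        and X'n: "\<forall>u\<in>{1..d}. \<forall>s\<in>{1..N}. \<forall>m. \<forall>p\<in>{1..N}.
             ord_ge (zU p) (z p)
               (\<lambda>x. X' u m s x - (if p = s then msc ((z p x) powi m) (Xb u) else 0)) (m + 1)"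
      have X'in': "\<forall>u\<in>{1..d}. \<forall>s\<in>{1..N}. \<forall>m. X' u m s \<in> I.G" using X'in unfolding GG .
      have XV': "\<And>m. \<forall>u\<in>{1..d}. \<forall>s\<in>{1..N}. X' u m s \<in> I.V m \<and> I.Lam m (X' u m s) = I.eps (u, s)"
        by (rule I.XV_lemma[where Y=X', OF X'in' X'n])
      show "\<forall>u\<in>{1..d}. \<forall>s\<in>{1..N}. \<forall>m. (\<lambda>x. X u m s x - X' u m s x) \<in> I.V (m + 1)"
      proof (intro ballI allI)
        fix u s m assume "u \<in> {1..d}" "s \<in> {1..N}"
        then show "(\<lambda>x. X u m s x - X' u m s x) \<in> I.V (m + 1)"
          by (rule I.part_d[where X=X and X'=X' and m=m, OF XV[of m] XV'[of m]])
      qed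
    qed
  qed
qed

end
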